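(* Let $a\in\mathbb{R}_{<0}$ and let $(a_1,a_2)$ satisfy one of: $a_1=0$, $a_2\in\mathbb{R}_{<0}$; or $a_1=-1-x+iy$, $a_2=x+iy$ with $-1\le x<0$, $y\in\mathbb{R}_{>0}$; or $-1<a_1,a_2<0$. Let $V$ be the Hilbert tensor product of $N(a_1,a_2)$ and $N(a,0)$ (described in the context). If a simple highest weight module $N(\lambda,0)$, of highest weight $\lambda$, is a Hilbert submodule of $V$, then $\lambda=a_1+a-a_2+2n_0$ for some integer $n_0$. Conversely: (1) if $a_1=0$, then for $n_0\in\mathbb{Z}$ the module $N(a-a_2+2n_0,0)$ is a Hilbert submodule of $V$ if and only if $0\le 2n_0<-1-a+a_2$; (2) if $a_1\neq0$, then for $n_0\in\mathbb{Z}$ the module $N(a_1+a-a_2+2n_0,0)$ is a Hilbert submodule of $V$ if and only if $2n_0<-1-a-a_1+a_2$.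
   Context: $\mathfrak{sl}(2,\mathbb{C})$ has basis $H,E,F$ with $[H,E]=2E$, $[H,F]=-2F$, $[E,F]=H$. For $(c_1,c_2)\in\mathbb{C}^2$ let $\mathcal{K}(c_1,c_2)$ be the set of $k\in\mathbb{Z}$ such that for each $i$ with $c_i\in\mathbb{Z}$ one has ($c_i+(-1)^{i-1}k<0$ iff $c_i<0$). $N(c_1,c_2)$ has basis $\{x(k):k\in\mathcal{K}(c_1,c_2)\}$ ($x(k):=0$ otherwise), $H x(k)=(c_1-c_2+2k)x(k)$, and: (I) neither $c_i$ a negative integer: $E x(k)=(c_2-k)x(k+1)$, $F x(k)=(c_1+k)x(k-1)$; (II) only $c_2$ a negative integer: $E x(k)=x(k+1)$, $F x(k)=(c_1+k)(c_2-k+1)x(k-1)$; (III) only $c_1$ a negative integer: $E x(k)=(c_1+k+1)(c_2-k)x(k+1)$, $F x(k)=x(k-1)$; (IV) both: $E x(k)=(c_1+k+1)x(k+1)$, $F x(k)=(c_2-k+1)x(k-1)$. Hilbert structures: on $N(a_1,a_2)$ the $x(k)$ are orthogonal, $\|x(0)\|=1$, and for $k>0$: if $a_2$ is not a negative integer, $\|x(k)\|^2=\prod_{j=1}^k\frac{j+a_1}{j-1-\bar a_2}$ and (when $a_1\neq0$) $\|x(-k)\|^2=\prod_{j=1}^k\frac{j+\bar a_2}{j-1-a_1}$; if $a_1=0$ and $a_2\in\mathbb{Z}_{<0}$, $\|x(k)\|^2=k!\prod_{j=1}^k(j-1-a_2)$. On $N(a,0)$ put $y(l)=x(-l)$, $l\in\mathbb{Z}_{\ge0}$,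 orthogonal with $\|y(0)\|=1$ and $\|y(l)\|^2=l!/\prod_{j=1}^l(j-1-a)$ if $a\notin\mathbb{Z}$, $\|y(l)\|^2=l!\prod_{j=1}^l(j-1-a)$ if $a\in\mathbb{Z}$. With $z(k,l)=x(k)\otimes y(l)$, $V=\{\sum u_{k,l}z(k,l):\sum|u_{k,l}|^2\|x(k)\|^2\|y(l)\|^2<\infty\}$. $H,E,F$ act on formal sums $\sum u_{k,l}z(k,l)$ termwise via $X(v\otimes w)=Xv\otimes w+v\otimes Xw$ (each coefficient of the result is a finite sum). A $\mathfrak{sl}(2,\mathbb{C})$-module $M$ is a Hilbert submodule of $V$ if there is an injective module homomorphism from $M$ into the module of such formal sums with image contained in $V$. *)

theory Defs
  imports "HOL-Analysis.Analysis"
begin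

definition negint :: "complex \<Rightarrow> bool" where
  "negint c \<longleftrightarrow> (\<exists>n::int. n < 0 \<and> c = of_int n)"

definition Kset :: "complex \<Rightarrow> complex \<Rightarrow> int set" where
  "Kset c1 c2 = {k. (\<forall>n::int. c1 = of_int n \<longrightarrow> (n + k < 0 \<longleftrightarrow> n < 0))
                  \<and> (\<forall>n::int. c2 = of_int n \<longrightarrow> (n - k < 0 \<longleftrightarrow> n < 0))}"

text \<open>Coefficients: E x(k) = eE c1 c2 k * x(k+1), F x(k) = eF c1 c2 k * x(k-1),
  H x(k) = hw c1 c2 k * x(k), following cases (I)-(IV).\<close>
definition eE :: "complex \<Rightarrow> complex \<Rightarrow> int \<Rightarrow> complex" where
  "eE c1 c2 k =
    (if \<not> negint c1 \<and> \<not> negint c2 then c2 - of_int k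
     else if \<not> negint c1 \<and> negint c2 then 1
     else if negint c1 \<and> \<not> negint c2 then (c1 + of_int k + 1) * (c2 - of_int k)
     else c1 + of_int k + 1)"

definition eF :: "complex \<Rightarrow> complex \<Rightarrow> int \<Rightarrow> complex" where
  "eF c1 c2 k =
    (if \<not> negint c1 \<and> \<not> negint c2 then c1 + of_int k
     else if \<not> negint c1 \<and> negint c2 then (c1 + of_int k) * (c2 - of_int k + 1)
     else if negint c1 \<and> \<not> negint c2 then 1
     else c2 - of_int k + 1)"

definition hw :: "complex \<Rightarrow> complex \<Rightarrow> int \<Rightarrow> complex" where
  "hw c1 c2 k = c1 - c2 + 2 * of_int k"

text \<open>Elements of N(c1,c2): finitely supported coefficient functions on K(c1,c2)
  (v k is the coefficient of x(k)).\<close>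
definition Nel :: "complex \<Rightarrow> complex \<Rightarrow> (int \<Rightarrow> complex) set" where
  "Nel c1 c2 = {v. finite {k. v k \<noteq> 0} \<and> (\<forall>k. k \<notin> Kset c1 c2 \<longrightarrow> v k = 0)}"

definition actE :: "complex \<Rightarrow> complex \<Rightarrow> (int \<Rightarrow> complex) \<Rightarrow> int \<Rightarrow> complex" where
  "actE c1 c2 v k = (if k \<in> Kset c1 c2 then eE c1 c2 (k - 1) * v (k - 1) else 0)"

definition actF :: "complex \<Rightarrow> complex \<Rightarrow> (int \<Rightarrow> complex) \<Rightarrow> int \<Rightarrow> complex" where
  "actF c1 c2 v k = (if k \<in> Kset c1 c2 then eF c1 c2 (k + 1) * v (k + 1) else 0)"

definition actH :: "complex \<Rightarrow> complex \<Rightarrow> (int \<Rightarrow> complex) \<Rightarrow> int \<Rightarrow> complex" where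
  "actH c1 c2 v k = (if k \<in> Kset c1 c2 then hw c1 c2 k * v k else 0)"

text \<open>Formal sums \<Sum> u(k,m) x(k) \<otimes> x(m) in N(a1,a2) \<otimes> N(a,0); here x(m) = y(-m),
  i.e. u(k,m) is the coefficient of z(k,-m).\<close>
definition FS :: "complex \<Rightarrow> complex \<Rightarrow> real \<Rightarrow> (int \<times> int \<Rightarrow> complex) set" where
  "FS a1 a2 a = {u. \<forall>k m. (k \<notin> Kset a1 a2 \<or> m \<notin> Kset (of_real a) 0) \<longrightarrow> u (k, m) = 0}"

definition tE :: "complex \<Rightarrow> complex \<Rightarrow> real \<Rightarrow> (int \<times> int \<Rightarrow> complex) \<Rightarrow> int \<times> int \<Rightarrow> complex" where
  "tE a1 a2 a u = (\<lambda>(k, m). actE a1 a2 (\<lambda>j. u (j, m)) k + actE (of_real a) 0 (\<lambda>j. u (k, j)) m)"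

definition tF :: "complex \<Rightarrow> complex \<Rightarrow> real \<Rightarrow> (int \<times> int \<Rightarrow> complex) \<Rightarrow> int \<times> int \<Rightarrow> complex" where
  "tF a1 a2 a u = (\<lambda>(k, m). actF a1 a2 (\<lambda>j. u (j, m)) k + actF (of_real a) 0 (\<lambda>j. u (k, j)) m)"

definition tH :: "complex \<Rightarrow> complex \<Rightarrow> real \<Rightarrow> (int \<times> int \<Rightarrow> complex) \<Rightarrow> int \<times> int \<Rightarrow> complex" where
  "tH a1 a2 a u = (\<lambda>(k, m). actH a1 a2 (\<lambda>j. u (j, m)) k + actH (of_real a) 0 (\<lambda>j. u (k, j)) m)"

definition xnorm2 :: "complex \<Rightarrow> complex \<Rightarrow> int \<Rightarrow> complex" where
  "xnorm2 a1 a2 k =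
    (if k = 0 then 1
     else if k > 0 then
       (if \<not> negint a2 then (\<Prod>j\<in>{1..nat k}. (of_nat j + a1) / (of_nat j - 1 - cnj a2))
        else if a1 = 0 then of_nat (fact (nat k)) * (\<Prod>j\<in>{1..nat k}. (of_nat j - 1 - a2))
        else 0)
     else (\<Prod>j\<in>{1..nat (- k)}. (of_nat j + cnj a2) / (of_nat j - 1 - a1)))"

text \<open>Squared norms ||y(l)||^2 on N(a,0), y(l) = x(-l).\<close>
definition ynorm2 :: "real \<Rightarrow> nat \<Rightarrow> real" where
  "ynorm2 a l =
    (if a \<notin> \<int> then fact l / (\<Prod>j\<in>{1..l}. (real j - 1 - a))
     else fact l * (\<Prod>j\<in>{1..l}. (real j - 1 - a)))"

definition inV :: "complex \<Rightarrow> complex \<Rightarrow> real \<Rightarrow> (int \<times> int \<Rightarrow> complex) \<Rightarrow> bool" where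
  "inV a1 a2 a u \<longleftrightarrow> u \<in> FS a1 a2 a \<and>
     ((\<lambda>(k, m). (cmod (u (k, m)))\<^sup>2 * Re (xnorm2 a1 a2 k) * ynorm2 a (nat (- m))) summable_on UNIV)"

definition hilb_sub :: "complex \<Rightarrow> complex \<Rightarrow> complex \<Rightarrow> real \<Rightarrow> bool" where
  "hilb_sub lam a1 a2 a \<longleftrightarrow> (\<exists>\<phi> :: (int \<Rightarrow> complex) \<Rightarrow> (int \<times> int \<Rightarrow> complex).
     (\<forall>v\<in>Nel lam 0. \<forall>w\<in>Nel lam 0. \<phi> (\<lambda>k. v k + w k) = (\<lambda>p. \<phi> v p + \<phi> w p)) \<and>
     (\<forall>c. \<forall>v\<in>Nel lam 0. \<phi> (\<lambda>k. c * v k) = (\<lambda>p. c * \<phi> v p)) \<and>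
     (\<forall>v\<in>Nel lam 0. \<phi> (actE lam 0 v) = tE a1 a2 a (\<phi> v)) \<and>
     (\<forall>v\<in>Nel lam 0. \<phi> (actF lam 0 v) = tF a1 a2 a (\<phi> v)) \<and>
     (\<forall>v\<in>Nel lam 0. \<phi> (actH lam 0 v) = tH a1 a2 a (\<phi> v)) \<and>
     inj_on \<phi> (Nel lam 0) \<and>
     (\<forall>v\<in>Nel lam 0. \<phi> v \<in> FS a1 a2 a \<and> inV a1 a2 a (\<phi> v)))"

end

theory Submission
  imports Defs "HOL-Analysis.Analysis"
begin

lemma negint_of_real: "negint (of_real r) \<longleftrightarrow> r \<in> \<int> \<and> r < 0"
  unfolding negint_def
  by (metis Ints_cases Ints_of_int of_int_less_0_iff of_real_eq_iff of_real_of_int_eq)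

lemma negint_0[simp]: "\<not> negint 0" by (simp add: negint_def)

lemma of_int_eq_of_real_iff: "((of_int n :: complex) = of_real r) \<longleftrightarrow> r = of_int n"
  by (metis of_real_eq_iff of_real_of_int_eq)

lemma Kset_c0:
  assumes "\<forall>n::int. c = of_int n \<longrightarrow> n < 0"
  shows "Kset c 0 = {k. k \<le> 0}"
proof -
  have "k \<in> Kset c 0 \<longleftrightarrow> k \<le> 0" for k
  proof
    assume "k \<in> Kset c 0"
    then have "\<forall>n::int. (0::complex) = of_int n \<longrightarrow> (n - k < 0 \<longleftrightarrow> n < 0)" unfolding Kset_def by blast
    from this[rule_format, of 0] show "k \<le> 0" by simp
  next
    assume "k \<le> 0"
    then show "k \<in> Kset c 0" using assms unfolding Kset_def by auto
  qed
  then show ?thesis by auto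
qed

lemma Kset_real0: "(l::real) < 0 \<Longrightarrow> Kset (of_real l) 0 = {k. k \<le> 0}"
proof (rule Kset_c0, intro allI impI)
  fix n :: int assume "l < 0" "complex_of_real l = of_int n"
  then have "l = of_int n" by (simp add: of_int_eq_of_real_iff[symmetric])
  with \<open>l < 0\<close> show "n < 0" by simp
qed

lemma Kset_c1: "Im a2 = 0 \<Longrightarrow> Re a2 < 0 \<Longrightarrow> Kset 0 a2 = {k. 0 \<le> k}"
proof -
  assume h: "Im a2 = 0" "Re a2 < 0"
  have "n < 0" if "a2 = of_int n" for n :: int
  proof -
    have "Re a2 = of_int n" using that by simp
    with h show ?thesis by simp
  qed
  then show ?thesis unfolding Kset_def by force
qed

lemma Kset_nonint: "(\<forall>n::int. a1 \<noteq> of_int n) \<Longrightarrow> (\<forall>n::int. a2 \<noteq> of_int n) \<Longrightarrow> Kset a1 a2 = UNIV"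
  unfolding Kset_def by auto

lemma nonint_Im: "Im z \<noteq> 0 \<Longrightarrow> z \<noteq> of_int n"
  by auto

lemma nonint_Re: "-1 < Re z \<Longrightarrow> Re z < 0 \<Longrightarrow> z \<noteq> of_int n"
proof
  assume "-1 < Re z" "Re z < 0" "z = of_int n"
  then have "real_of_int (-1) < real_of_int n" "real_of_int n < real_of_int 0" by auto
  then have "-1 < n" "n < 0" by (simp_all only: of_int_less_iff)
  then show False by linarith
qed

lemma eE_real0: "(l::real) < 0 \<Longrightarrow> eE (of_real l) 0 k =
   (if l \<in> \<int> then (of_real l + of_int k + 1) * (- of_int k) else - of_int k)"
  by (simp add: eE_def negint_of_real)

lemma eF_real0: "(l::real) < 0 \<Longrightarrow> eF (of_real l) 0 k =
   (if l \<in> \<int> then 1 else of_real l + of_int k)"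
  by (simp add: eF_def negint_of_real)

lemma e2_form: "a < 0 \<Longrightarrow> eE (of_real a) 0 (- int j - 1) =
   of_real (if a \<in> \<int> then (a - real j) * (real j + 1) else real j + 1)"
  by (simp add: eE_real0 algebra_simps)

lemma f2_form: "a < 0 \<Longrightarrow> eF (of_real a) 0 (- int j) =
   of_real (if a \<in> \<int> then 1 else a - real j)"
  by (simp add: eF_real0)

lemma ynorm2_Suc: "ynorm2 a (Suc j) = ynorm2 a j *
   (if a \<in> \<int> then real (Suc j) * (real j - a) else real (Suc j) / (real j - a))"
  unfolding ynorm2_def by (auto simp: prod.nat_ivl_Suc' field_simps)

lemma ynorm2_pos: "a < 0 \<Longrightarrow> ynorm2 a j > 0"
proof (induction j)
  case 0 then show ?case by (simp add: ynorm2_def)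
next
  case (Suc j)
  then show ?case by (simp add: ynorm2_Suc)
qed

lemma ynorm2_0: "ynorm2 a 0 = 1" by (simp add: ynorm2_def)

lemma Y_rel:
  assumes "a < 0"
  shows "of_real (ynorm2 a (Suc j)) * cnj (eF (of_real a) 0 (- int j))
        = - eE (of_real a) 0 (- int j - 1) * of_real (ynorm2 a j)"
proof -
  have ne: "real j - a \<noteq> 0" using assms by simp
  have "ynorm2 a (Suc j) * (if a \<in> \<int> then 1 else a - real j) =
        - (if a \<in> \<int> then (a - real j) * (real j + 1) else real j + 1) * ynorm2 a j"
    using ne by (auto simp: ynorm2_Suc field_simps)
  then have "complex_of_real (ynorm2 a (Suc j) * (if a \<in> \<int> then 1 else a - real j)) =
        complex_of_real (- (if a \<in> \<int> then (a - real j) * (real j + 1) else real j + 1) * ynorm2 a j)"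
    by simp
  then show ?thesis using assms by (simp only: e2_form f2_form complex_cnj_complex_of_real of_real_mult of_real_minus)
qed

lemma Y_prod:
  assumes "a < 0"
  shows "eE (of_real a) 0 (- int j - 1) * eF (of_real a) 0 (- int j) = of_real ((real j + 1) * (a - real j))"
  using assms by (auto simp: e2_form f2_form field_simps)

lemma e2_nz:
  assumes "a < 0"
  shows "eE (of_real a) 0 (- int j - 1) \<noteq> 0"
  using assms by (simp add: e2_form)

definition XR :: "real \<Rightarrow> real \<Rightarrow> int \<Rightarrow> real" where
  "XR r1 r2 k = (if k = 0 then 1 else if k > 0 then (\<Prod>j\<in>{1..nat k}. (real j + r1) / (real j - 1 - r2))
     else (\<Prod>j\<in>{1..nat (- k)}. (real j + r2) / (real j - 1 - r1)))"

lemma xnorm2_real_I: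
  assumes "\<not> negint (of_real r2)"
  shows "xnorm2 (of_real r1) (of_real r2) k = of_real (XR r1 r2 k)"
  using assms unfolding xnorm2_def XR_def by (simp add: of_real_prod)

lemma XR_all:
  "XR r1 r2 k = (if 0 \<le> k then (\<Prod>j\<in>{1..nat k}. (real j + r1) / (real j - 1 - r2))
     else (\<Prod>j\<in>{1..nat (- k)}. (real j + r2) / (real j - 1 - r1)))"
  unfolding XR_def by auto

lemma XR_pos_step: "XR r1 r2 (int n + 1) = XR r1 r2 (int n) * (real (Suc n) + r1) / (real n - r2)"
proof -
  have "nat (int n + 1) = Suc n" by simp
  then show ?thesis unfolding XR_all by (simp add: prod.nat_ivl_Suc')
qed

lemma XR_neg_step: "XR r1 r2 (- int n - 1) = XR r1 r2 (- int n) * (real (Suc n) + r2) / (real n - r1)"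
proof -
  have a: "nat (- (- int n - 1)) = Suc n" "nat (- (- int n)) = n" by simp_all
  show ?thesis unfolding XR_all
    by (cases "n = 0") (simp_all only: a prod.nat_ivl_Suc' , auto)
qed

lemma XR_rec:
  assumes "1 \<le> k \<and> r2 < 0 \<or> k \<le> 0 \<and> - real_of_int k - r1 \<noteq> 0"
  shows "XR r1 r2 k * (real_of_int k - 1 - r2) = XR r1 r2 (k - 1) * (real_of_int k + r1)"
  using assms
proof
  assume h: "1 \<le> k \<and> r2 < 0"
  define n where "n = nat (k - 1)"
  have k: "k = int n + 1" using h n_def by simp
  have "real n - r2 \<noteq> 0" using h by simp
  then show ?thesis unfolding k using XR_pos_step[of r1 r2 n] by (simp add: field_simps)
next
  assume h: "k \<le> 0 \<and> - real_of_int k - r1 \<noteq> 0"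
  define n where "n = nat (- k)"
  have k: "k = - int n" using h n_def by simp
  have "real n - r1 \<noteq> 0" using h k by simp
  then show ?thesis unfolding k using XR_neg_step[of r1 r2 n] by (simp add: field_simps)
qed

lemma XR_pos:
  assumes "0 \<le> k \<and> -1 < r1 \<and> r2 < 0 \<or> (-1 < r1 \<and> r1 < 0 \<and> -1 < r2 \<and> r2 < 0)"
  shows "XR r1 r2 k > 0"
proof (cases "0 \<le> k")
  case True
  have "(\<Prod>j\<in>{1..nat k}. (real j + r1) / (real j - 1 - r2)) > 0"
    using assms by (intro prod_pos) auto
  then show ?thesis using True unfolding XR_all by simp
next
  case False
  have "(\<Prod>j\<in>{1..nat (-k)}. (real j + r2) / (real j - 1 - r1)) > 0"
    using assms False by (intro prod_pos) auto
  then show ?thesis using False unfolding XR_all by simp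
qed

definition XII :: "real \<Rightarrow> int \<Rightarrow> real" where
  "XII r2 k = fact (nat k) * (\<Prod>j\<in>{1..nat k}. (real j - 1 - r2))"

lemma xnorm2_II:
  assumes "negint (of_real r2)" "0 \<le> k"
  shows "xnorm2 0 (of_real r2) k = of_real (XII r2 k)"
  using assms unfolding xnorm2_def XII_def by (auto simp: of_real_prod)

lemma XII_rec: "1 \<le> k \<Longrightarrow> XII r2 k = XII r2 (k - 1) * real_of_int k * (real_of_int k - 1 - r2)"
proof -
  assume "1 \<le> k"
  define n where "n = nat (k - 1)"
  have k: "k = int n + 1" using \<open>1 \<le> k\<close> n_def by simp
  have "nat (int n + 1) = Suc n" by simp
  then show ?thesis unfolding k XII_def by (simp add: prod.nat_ivl_Suc' algebra_simps)
qed

lemma XII_pos: "r2 < 0 \<Longrightarrow> XII r2 k > 0"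
  unfolding XII_def by (intro mult_pos_pos prod_pos) auto

definition hypA :: "complex \<Rightarrow> complex \<Rightarrow> bool" where
  "hypA a1 a2 \<longleftrightarrow> (a1 = 0 \<and> Im a2 = 0 \<and> Re a2 < 0)
       \<or> (\<exists>x y. -1 \<le> x \<and> x < 0 \<and> y > 0 \<and> a1 = Complex (-1 - x) y \<and> a2 = Complex x y)
       \<or> (Im a1 = 0 \<and> Im a2 = 0 \<and> -1 < Re a1 \<and> Re a1 < 0 \<and> -1 < Re a2 \<and> Re a2 < 0)"

lemma not_int_real: "-1 < r \<Longrightarrow> r < 0 \<Longrightarrow> (r::real) \<notin> \<int>"
proof
  assume "-1 < r" "r < 0" "r \<in> \<int>"
  then obtain n where "r = of_int n" by (auto elim: Ints_cases)
  with \<open>-1 < r\<close> \<open>r < 0\<close> have "-1 < n" "n < 0" by simp_all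
  then show False by simp
qed

lemma not_negint_real: "-1 < r \<Longrightarrow> r < 0 \<Longrightarrow> \<not> negint (of_real r)"
  by (simp add: negint_of_real not_int_real)

lemma real_cplx: "Im z = 0 \<Longrightarrow> z = of_real (Re z)"
  by (simp add: complex_eq_iff)

lemma hypA_cases:
  assumes "hypA a1 a2"
  obtains (C1) r2 where "a1 = 0" "a2 = of_real r2" "r2 < 0"
    | (C2) x y where "-1 \<le> x" "x < 0" "y > 0" "a1 = Complex (-1 - x) y" "a2 = Complex x y"
    | (C3) r1 r2 where "a1 = of_real r1" "a2 = of_real r2" "-1 < r1" "r1 < 0" "-1 < r2" "r2 < 0"
  using assms unfolding hypA_def by (metis Re_complex_of_real real_cplx)

lemma K1_form: "hypA a1 a2 \<Longrightarrow> Kset a1 a2 = (if a1 = 0 then {k. 0 \<le> k} else UNIV)"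
proof (induction rule: hypA_cases)
  case (C1 r2) then show ?case using Kset_c1[of a2] by simp
next
  case (C2 x y)
  then have "a1 \<noteq> 0" by (auto simp: complex_eq_iff)
  moreover have "Kset a1 a2 = UNIV" using C2 by (intro Kset_nonint) (auto simp: complex_eq_iff)
  ultimately show ?case by simp
next
  case (C3 r1 r2)
  have "a1 \<noteq> 0" using C3 by simp
  moreover have "Kset a1 a2 = UNIV"
    using C3 by (intro Kset_nonint allI nonint_Re) auto
  ultimately show ?case by simp
qed

lemma F0: "hypA a1 a2 \<Longrightarrow> k \<in> Kset a1 a2 \<Longrightarrow> k + 1 \<in> Kset a1 a2"
  by (simp add: K1_form split: if_splits)

definition qq :: "complex \<Rightarrow> complex \<Rightarrow> int \<Rightarrow> complex" where
  "qq a1 a2 k = (of_int k - 1 - a2) * (of_int k + a1)"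

lemma F3: "hypA a1 a2 \<Longrightarrow> eE a1 a2 (k-1) * eF a1 a2 k = - qq a1 a2 k"
proof (induction rule: hypA_cases)
  case (C1 r2)
  then show ?case by (auto simp: eE_def eF_def qq_def algebra_simps)
next
  case (C2 x y)
  have "\<not> negint a1" "\<not> negint a2" using C2 by (auto simp: negint_def complex_eq_iff)
  then show ?case by (auto simp: eE_def eF_def qq_def algebra_simps)
next
  case (C3 r1 r2)
  have "\<not> negint a1" "\<not> negint a2" using C3 by (simp_all add: not_negint_real)
  then show ?case by (auto simp: eE_def eF_def qq_def algebra_simps)
qed

lemma xnorm2_C2:
  assumes "y > 0"
  shows "xnorm2 (Complex (-1 - x) y) (Complex x y) k = 1"
proof -
  have n: "\<not> negint (Complex x y)" using assms by (auto simp: negint_def complex_eq_iff)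
  have f1: "(of_nat j + Complex (-1 - x) y) / (of_nat j - 1 - cnj (Complex x y)) = 1" for j :: nat
  proof -
    have "(of_nat j + Complex (-1 - x) y) = (of_nat j - 1 - cnj (Complex x y))"
      by (simp add: complex_eq_iff)
    moreover have "(of_nat j - 1 - cnj (Complex x y)) \<noteq> 0" using assms by (simp add: complex_eq_iff)
    ultimately show ?thesis by simp
  qed
  have f2: "(of_nat j + cnj (Complex x y)) / (of_nat j - 1 - Complex (-1 - x) y) = 1" for j :: nat
  proof -
    have "(of_nat j + cnj (Complex x y)) = (of_nat j - 1 - Complex (-1 - x) y)"
      by (simp add: complex_eq_iff)
    moreover have "(of_nat j - 1 - Complex (-1 - x) y) \<noteq> 0" using assms by (simp add: complex_eq_iff)
    ultimately show ?thesis by simp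
  qed
  show ?thesis unfolding xnorm2_def using n by (simp add: f1 f2)
qed

lemma F1:
  assumes "hypA a1 a2" "k \<in> Kset a1 a2"
  shows "xnorm2 a1 a2 k = of_real (Re (xnorm2 a1 a2 k)) \<and> Re (xnorm2 a1 a2 k) > 0"
  using assms(1)
proof (cases rule: hypA_cases)
  case (C1 r2)
  then have k: "0 \<le> k" using assms K1_form by auto
  show ?thesis
  proof (cases "negint a2")
    case True
    then show ?thesis using C1 k xnorm2_II[of r2 k] XII_pos[of r2 k] by simp
  next
    case False
    then have "xnorm2 a1 a2 k = of_real (XR 0 r2 k)" using C1 xnorm2_real_I[of r2 0 k] by simp
    moreover have "XR 0 r2 k > 0" using C1 k by (intro XR_pos) auto
    ultimately show ?thesis by simp
  qed
next
  case (C2 x y)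
  then show ?thesis using xnorm2_C2 by simp
next
  case (C3 r1 r2)
  have "xnorm2 a1 a2 k = of_real (XR r1 r2 k)" using C3 xnorm2_real_I[of r2 r1 k] not_negint_real by simp
  moreover have "XR r1 r2 k > 0" using C3 by (intro XR_pos) auto
  ultimately show ?thesis by simp
qed

lemma F2:
  assumes "hypA a1 a2" "k \<in> Kset a1 a2" "k - 1 \<in> Kset a1 a2"
  shows "cnj (eF a1 a2 k) * of_real (Re (xnorm2 a1 a2 (k - 1))) = - eE a1 a2 (k - 1) * of_real (Re (xnorm2 a1 a2 k))"
  using assms(1)
proof (cases rule: hypA_cases)
  case (C1 r2)
  then have k: "1 \<le> k" using assms K1_form by auto
  show ?thesis
  proof (cases "negint a2")
    case True
    have x1: "xnorm2 a1 a2 k = of_real (XII r2 k)" using True C1 k xnorm2_II[of r2 k] by simp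
    have x2: "xnorm2 a1 a2 (k-1) = of_real (XII r2 (k-1))" using True C1 k xnorm2_II[of r2 "k-1"] by simp
    have "real_of_int k * (r2 - real_of_int k + 1) * XII r2 (k - 1) = - XII r2 k"
      using XII_rec[OF k, of r2] by (simp add: algebra_simps)
    then have "complex_of_real (real_of_int k * (r2 - real_of_int k + 1) * XII r2 (k - 1)) = complex_of_real (- XII r2 k)" by simp
    then show ?thesis using True C1 unfolding x1 x2 by (simp add: eE_def eF_def algebra_simps)
  next
    case False
    have x1: "xnorm2 a1 a2 k = of_real (XR 0 r2 k)" using False C1 xnorm2_real_I[of r2 0 k] by simp
    have x2: "xnorm2 a1 a2 (k-1) = of_real (XR 0 r2 (k-1))" using False C1 xnorm2_real_I[of r2 0 "k-1"] by simp
    have "real_of_int k * XR 0 r2 (k - 1) = (real_of_int k - 1 - r2) * XR 0 r2 k"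
      using XR_rec[of k r2 0] k C1 by (simp add: algebra_simps)
    then have "complex_of_real (real_of_int k * XR 0 r2 (k - 1)) = complex_of_real ((real_of_int k - 1 - r2) * XR 0 r2 k)" by simp
    then show ?thesis using False C1 unfolding x1 x2 by (simp add: eE_def eF_def algebra_simps)
  qed
next
  case (C2 x y)
  have "\<not> negint a1" "\<not> negint a2" using C2 by (auto simp: negint_def complex_eq_iff)
  then show ?thesis using C2 unfolding C2(4) C2(5) by (simp add: xnorm2_C2 eE_def eF_def complex_eq_iff)
next
  case (C3 r1 r2)
  have n: "\<not> negint a1" "\<not> negint a2" using C3 by (simp_all add: not_negint_real)
  have x1: "xnorm2 a1 a2 k = of_real (XR r1 r2 k)" using C3 xnorm2_real_I[of r2 r1 k] not_negint_real by simp
  have x2: "xnorm2 a1 a2 (k-1) = of_real (XR r1 r2 (k-1))" using C3 xnorm2_real_I[of r2 r1 "k-1"] not_negint_real by simp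
  have "1 \<le> k \<and> r2 < 0 \<or> k \<le> 0 \<and> - real_of_int k - r1 \<noteq> 0" using C3 by auto
  then have "(r1 + real_of_int k) * XR r1 r2 (k - 1) = (real_of_int k - 1 - r2) * XR r1 r2 k"
    using XR_rec[of k r2 r1] by (simp add: algebra_simps)
  then have "complex_of_real ((r1 + real_of_int k) * XR r1 r2 (k - 1)) = complex_of_real ((real_of_int k - 1 - r2) * XR r1 r2 k)" by simp
  then show ?thesis using n C3 unfolding x1 x2 by (simp add: eE_def eF_def algebra_simps)
qed

lemma F4:
  assumes "hypA a1 a2" "k \<in> Kset a1 a2" "k - 1 \<in> Kset a1 a2"
  shows "Im (qq a1 a2 k) = 0 \<and> Re (qq a1 a2 k) > 0"
  using assms(1)
proof (cases rule: hypA_cases)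
  case (C1 r2)
  then have k: "1 \<le> k" using assms K1_form by auto
  have "(real_of_int k - 1 - r2) * real_of_int k > 0" using k C1 by (intro mult_pos_pos) auto
  then show ?thesis using C1 by (simp add: qq_def)
next
  case (C2 x y)
  have "(real_of_int k - 1 - x) * (real_of_int k - 1 - x) + y * y > 0"
    using C2 by (intro add_nonneg_pos) auto
  then show ?thesis using C2 by (simp add: qq_def algebra_simps)
next
  case (C3 r1 r2)
  have "(real_of_int k - 1 - r2) * (real_of_int k + r1) > 0"
  proof (cases "1 \<le> k")
    case True then show ?thesis using C3 by (intro mult_pos_pos) auto
  next
    case False then have "k \<le> 0" by simp
    then show ?thesis using C3 by (intro mult_neg_neg) auto
  qed
  then show ?thesis using C3 by (simp add: qq_def)
qed

lemma F5:
  assumes "hypA a1 a2" "k \<in> Kset a1 a2" "k - 1 \<notin> Kset a1 a2"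
  shows "eF a1 a2 k = 0 \<and> qq a1 a2 k = 0"
proof -
  have "a1 = 0" "k = 0" using assms K1_form[OF assms(1)] by (auto split: if_splits)
  then show ?thesis by (simp add: eF_def qq_def)
qed

lemma negint_of_int: "negint (of_int n) \<longleftrightarrow> n < 0"
  unfolding negint_def by auto

lemma mod_alg: "eE c1 c2 (k-1) * eF c1 c2 k - eE c1 c2 k * eF c1 c2 (k+1) = hw c1 c2 k"
  unfolding eE_def eF_def hw_def by (auto simp: algebra_simps)

lemma Kset_notin: "k \<notin> Kset c1 c2 \<longleftrightarrow>
   (\<exists>n::int. c1 = of_int n \<and> \<not> (n + k < 0 \<longleftrightarrow> n < 0)) \<or> (\<exists>n::int. c2 = of_int n \<and> \<not> (n - k < 0 \<longleftrightarrow> n < 0))"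
  unfolding Kset_def by auto

lemma Kset_in: "k \<in> Kset c1 c2 \<Longrightarrow> c1 = of_int n \<Longrightarrow> (n + k < 0 \<longleftrightarrow> n < 0)"
  unfolding Kset_def by auto

lemma Kset_in2: "k \<in> Kset c1 c2 \<Longrightarrow> c2 = of_int n \<Longrightarrow> (n - k < 0 \<longleftrightarrow> n < 0)"
  unfolding Kset_def by auto

lemma mod_B1:
  assumes "k \<in> Kset c1 c2" "k - 1 \<notin> Kset c1 c2"
  shows "eE c1 c2 (k-1) * eF c1 c2 k = 0"
proof -
  from assms(2) consider (a) n where "c1 = of_int n" "\<not> (n + (k-1) < 0 \<longleftrightarrow> n < 0)"
    | (b) n where "c2 = of_int n" "\<not> (n - (k-1) < 0 \<longleftrightarrow> n < 0)"
    unfolding Kset_notin by blast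
  then show ?thesis
  proof cases
    case a
    have "n + k < 0 \<longleftrightarrow> n < 0" using Kset_in[OF assms(1) a(1)] .
    with a(2) have "n \<ge> 0" "k = - n" by auto
    then have "c1 + of_int k = 0" "\<not> negint c1" using a(1) by (auto simp: negint_of_int)
    then show ?thesis unfolding eF_def by auto
  next
    case b
    have "n - k < 0 \<longleftrightarrow> n < 0" using Kset_in2[OF assms(1) b(1)] .
    with b(2) have "n < 0" "k = n + 1" by auto
    then have "c2 - of_int k + 1 = 0" "negint c2" using b(1) by (auto simp: negint_of_int)
    then show ?thesis unfolding eF_def by auto
  qed
qed

lemma mod_B2:
  assumes "k \<in> Kset c1 c2" "k + 1 \<notin> Kset c1 c2"
  shows "eE c1 c2 k * eF c1 c2 (k+1) = 0"
proof -
  from assms(2) consider (a) n where "c1 = of_int n" "\<not> (n + (k+1) < 0 \<longleftrightarrow> n < 0)"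
    | (b) n where "c2 = of_int n" "\<not> (n - (k+1) < 0 \<longleftrightarrow> n < 0)"
    unfolding Kset_notin by blast
  then show ?thesis
  proof cases
    case a
    have "n + k < 0 \<longleftrightarrow> n < 0" using Kset_in[OF assms(1) a(1)] .
    with a(2) have "n < 0" "k = - n - 1" by auto
    then have "c1 + of_int k + 1 = 0" "negint c1" using a(1) by (auto simp: negint_of_int)
    then show ?thesis unfolding eE_def by auto
  next
    case b
    have "n - k < 0 \<longleftrightarrow> n < 0" using Kset_in2[OF assms(1) b(1)] .
    with b(2) have "n \<ge> 0" "k = n" by auto
    then have "c2 - of_int k = 0" "\<not> negint c2" using b(1) by (auto simp: negint_of_int)
    then show ?thesis unfolding eE_def by auto
  qed
qed

lemma mod_comm:
  assumes "k \<in> Kset c1 c2"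
  shows "(if k - 1 \<in> Kset c1 c2 then eE c1 c2 (k-1) * eF c1 c2 k else 0)
       - (if k + 1 \<in> Kset c1 c2 then eE c1 c2 k * eF c1 c2 (k+1) else 0) = hw c1 c2 k"
  using mod_alg[of c1 c2 k] mod_B1[OF assms] mod_B2[OF assms] by (auto split: if_splits)

lemma tE_pt: "tE a1 a2 a u (k, m) =
   (if k \<in> Kset a1 a2 then eE a1 a2 (k-1) * u (k-1, m) else 0) +
   (if m \<in> Kset (of_real a) 0 then eE (of_real a) 0 (m-1) * u (k, m-1) else 0)"
  unfolding tE_def actE_def by simp

lemma tF_pt: "tF a1 a2 a u (k, m) =
   (if k \<in> Kset a1 a2 then eF a1 a2 (k+1) * u (k+1, m) else 0) +
   (if m \<in> Kset (of_real a) 0 then eF (of_real a) 0 (m+1) * u (k, m+1) else 0)"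
  unfolding tF_def actF_def by simp

lemma tH_pt: "tH a1 a2 a u (k, m) =
   (if k \<in> Kset a1 a2 then hw a1 a2 k * u (k, m) else 0) +
   (if m \<in> Kset (of_real a) 0 then hw (of_real a) 0 m * u (k, m) else 0)"
  unfolding tH_def actH_def by simp

lemma t_comm: "tE a1 a2 a (tF a1 a2 a u) p - tF a1 a2 a (tE a1 a2 a u) p = tH a1 a2 a u p"
proof -
  obtain k m where p: "p = (k, m)" by (cases p)
  define K1 where "K1 = Kset a1 a2"
  define K2 where "K2 = Kset (complex_of_real a) 0"
  have c1: "k \<in> K1 \<Longrightarrow> hw a1 a2 k = (if k - 1 \<in> K1 then eE a1 a2 (k-1) * eF a1 a2 k else 0)
       - (if k + 1 \<in> K1 then eE a1 a2 k * eF a1 a2 (k+1) else 0)"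
    unfolding K1_def by (rule mod_comm[symmetric])
  have c2: "m \<in> K2 \<Longrightarrow> hw (of_real a) 0 m = (if m - 1 \<in> K2 then eE (of_real a) 0 (m-1) * eF (of_real a) 0 m else 0)
       - (if m + 1 \<in> K2 then eE (of_real a) 0 m * eF (of_real a) 0 (m+1) else 0)"
    unfolding K2_def by (rule mod_comm[symmetric])
  show ?thesis unfolding p tE_pt tF_pt tH_pt K1_def[symmetric] K2_def[symmetric]
    by (cases "k \<in> K1"; cases "m \<in> K2"; cases "k - 1 \<in> K1"; cases "k + 1 \<in> K1";
        cases "m - 1 \<in> K2"; cases "m + 1 \<in> K2") (simp_all add: c1 c2 algebra_simps)
qed

lemma tE_FS: "tE a1 a2 a u \<in> FS a1 a2 a" if "u \<in> FS a1 a2 a"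
  using that unfolding FS_def by (auto simp: tE_pt)

lemma tF_FS: "tF a1 a2 a u \<in> FS a1 a2 a" if "u \<in> FS a1 a2 a"
  using that unfolding FS_def by (auto simp: tF_pt)

lemma tH_FS: "tH a1 a2 a u \<in> FS a1 a2 a" if "u \<in> FS a1 a2 a"
  using that unfolding FS_def by (auto simp: tH_pt)

lemma FS_zero: "u \<in> FS a1 a2 a \<Longrightarrow> k \<notin> Kset a1 a2 \<or> m \<notin> Kset (of_real a) 0 \<Longrightarrow> u (k, m) = 0"
  unfolding FS_def by auto

lemma tH_on_FS: "u \<in> FS a1 a2 a \<Longrightarrow> tH a1 a2 a u (k, m) = (hw a1 a2 k + hw (of_real a) 0 m) * u (k, m)"
  by (auto simp: tH_pt FS_zero algebra_simps)

lemma t_HF: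
  assumes "u \<in> FS a1 a2 a"
  shows "tH a1 a2 a (tF a1 a2 a u) p = tF a1 a2 a (tH a1 a2 a u) p - 2 * tF a1 a2 a u p"
proof -
  obtain k m where p: "p = (k, m)" by (cases p)
  have z: "\<And>k m. k \<notin> Kset a1 a2 \<or> m \<notin> Kset (of_real a) 0 \<Longrightarrow> u (k, m) = 0"
    using FS_zero[OF assms] by blast
  show ?thesis unfolding p tH_on_FS[OF tF_FS[OF assms]]
    by (cases "k \<in> Kset a1 a2"; cases "m \<in> Kset (of_real a) 0")
      (auto simp: tF_pt tH_on_FS[OF assms] z hw_def algebra_simps)
qed

lemma tE_scale: "tE a1 a2 a (\<lambda>p. c * u p) = (\<lambda>p. c * tE a1 a2 a u p)"
  by (rule ext, case_tac p) (simp add: tE_pt algebra_simps)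
lemma tF_scale: "tF a1 a2 a (\<lambda>p. c * u p) = (\<lambda>p. c * tF a1 a2 a u p)"
  by (rule ext, case_tac p) (simp add: tF_pt algebra_simps)
lemma tH_scale: "tH a1 a2 a (\<lambda>p. c * u p) = (\<lambda>p. c * tH a1 a2 a u p)"
  by (rule ext, case_tac p) (simp add: tH_pt algebra_simps)

lemma tE_sum: "tE a1 a2 a (\<lambda>p. \<Sum>i\<in>S. f i p) = (\<lambda>p. \<Sum>i\<in>S. tE a1 a2 a (f i) p)"
  by (rule ext, case_tac p) (simp add: tE_pt sum_distrib_left sum.distrib)
lemma tF_sum: "tF a1 a2 a (\<lambda>p. \<Sum>i\<in>S. f i p) = (\<lambda>p. \<Sum>i\<in>S. tF a1 a2 a (f i) p)"
  by (rule ext, case_tac p) (simp add: tF_pt sum_distrib_left sum.distrib)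
lemma tH_sum: "tH a1 a2 a (\<lambda>p. \<Sum>i\<in>S. f i p) = (\<lambda>p. \<Sum>i\<in>S. tH a1 a2 a (f i) p)"
  by (rule ext, case_tac p) (simp add: tH_pt sum_distrib_left sum.distrib)

lemma tE_zero: "tE a1 a2 a (\<lambda>p. 0) = (\<lambda>p. 0)"
  by (rule ext, case_tac p) (simp add: tE_pt)

lemma weight_support:
  assumes "u \<in> FS a1 a2 a" "tH a1 a2 a u = (\<lambda>p. \<mu> * u p)" "u (k, m) \<noteq> 0"
  shows "\<mu> = a1 - a2 + of_real a + 2 * of_int (k + m)"
proof -
  have "\<mu> * u (k, m) = (hw a1 a2 k + hw (of_real a) 0 m) * u (k, m)"
    using tH_on_FS[OF assms(1), of k m] assms(2) by (metis)
  with assms(3) have "\<mu> = hw a1 a2 k + hw (of_real a) 0 m" by simp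
  then show ?thesis by (simp add: hw_def algebra_simps)
qed

lemma weight_diag:
  assumes "u \<in> FS a1 a2 a" "tH a1 a2 a u = (\<lambda>p. (a1 - a2 + of_real a + 2 * of_int d) * u p)" "u (k, m) \<noteq> 0"
  shows "k + m = d"
proof -
  have "a1 - a2 + of_real a + 2 * of_int d = a1 - a2 + of_real a + 2 * (of_int (k + m) :: complex)"
    using weight_support[OF assms] .
  then have "(of_int (2 * d) :: complex) = of_int (2 * (k + m))" by simp
  then have "2 * d = 2 * (k + m)" by (simp only: of_int_eq_iff)
  then show ?thesis by presburger
qed

primrec Wseq :: "complex \<Rightarrow> complex \<Rightarrow> real \<Rightarrow> real \<Rightarrow> (int \<times> int \<Rightarrow> complex) \<Rightarrow> nat \<Rightarrow> (int \<times> int \<Rightarrow> complex)" where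
  "Wseq a1 a2 a l u 0 = u"
| "Wseq a1 a2 a l u (Suc n) = (\<lambda>p. inverse (eF (of_real l) 0 (- int n)) * tF a1 a2 a (Wseq a1 a2 a l u n) p)"

lemma tF_zero: "tF a1 a2 a (\<lambda>p. 0) = (\<lambda>p. 0)"
  by (rule ext, case_tac p) (simp add: tF_pt)

locale hwv =
  fixes a1 a2 :: complex and a l :: real and u :: "int \<times> int \<Rightarrow> complex"
  assumes uFS: "u \<in> FS a1 a2 a"
    and uE: "tE a1 a2 a u = (\<lambda>p. 0)"
    and uH: "tH a1 a2 a u = (\<lambda>p. of_real l * u p)"
    and lneg: "l < 0"
    and unz: "u \<noteq> (\<lambda>p. 0)"
begin

abbreviation W where "W \<equiv> Wseq a1 a2 a l u"
abbreviation eL where "eL \<equiv> eE (of_real l) 0"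
abbreviation fL where "fL \<equiv> eF (of_real l) 0"

lemma fL_nz: "fL (- int n) \<noteq> 0"
proof -
  have "complex_of_real l + of_int (- int n) \<noteq> 0"
  proof
    assume "complex_of_real l + of_int (- int n) = 0"
    then have "Re (complex_of_real l + of_int (- int n)) = 0" by simp
    then have "l = real n" by simp
    with lneg show False by simp
  qed
  then show ?thesis using lneg by (simp add: eF_real0)
qed

lemma eL_nz: "eL (- int n - 1) \<noteq> 0"
  using e2_nz[OF lneg] .

lemma W_FS: "W n \<in> FS a1 a2 a"
proof (induction n)
  case 0 then show ?case using uFS by simp
next
  case (Suc n)
  have "tF a1 a2 a (W n) \<in> FS a1 a2 a" by (rule tF_FS[OF Suc])
  then show ?case unfolding FS_def by auto
qed

lemma W_F: "tF a1 a2 a (W n) = (\<lambda>p. fL (- int n) * W (Suc n) p)"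
  using fL_nz[of n] by (simp add: field_simps)

lemma W_H: "tH a1 a2 a (W n) = (\<lambda>p. (of_real l - 2 * of_nat n) * W n p)"
proof (induction n)
  case 0 then show ?case using uH by simp
next
  case (Suc n)
  have "tH a1 a2 a (W (Suc n)) p = inverse (fL (- int n)) * tH a1 a2 a (tF a1 a2 a (W n)) p" for p
    by (simp add: tH_scale)
  also have "\<dots> p = inverse (fL (- int n)) * (tF a1 a2 a (tH a1 a2 a (W n)) p - 2 * tF a1 a2 a (W n) p)" for p
    by (simp add: t_HF[OF W_FS])
  also have "\<dots> p = (of_real l - 2 * of_nat (Suc n)) * W (Suc n) p" for p
    unfolding Suc tF_scale by (simp add: algebra_simps)
  finally show ?case by auto
qed

lemma W_E0: "tE a1 a2 a (W 0) = (\<lambda>p. 0)"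
  using uE by simp

lemma W_E: "tE a1 a2 a (W (Suc n)) = (\<lambda>p. eL (- int n - 1) * W n p)"
proof (induction n)
  case 0
  have "tE a1 a2 a (W (Suc 0)) p = inverse (fL 0) * tE a1 a2 a (tF a1 a2 a u) p" for p
    by (simp add: tE_scale)
  also have "\<dots> p = inverse (fL 0) * (of_real l * u p)" for p
    using t_comm[of a1 a2 a u p] by (simp add: uE uH tF_zero)
  also have "\<dots> p = eL (- 1) * u p" for p
  proof -
    have "l \<noteq> 0" using lneg by simp
    then show ?thesis using lneg by (simp add: eF_real0 eE_real0)
  qed
  finally show ?case by auto
next
  case (Suc n)
  have "tE a1 a2 a (W (Suc (Suc n))) p = inverse (fL (- int (Suc n))) * tE a1 a2 a (tF a1 a2 a (W (Suc n))) p" for p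
    by (simp add: tE_scale)
  also have "\<dots> p = inverse (fL (- int (Suc n))) * (tF a1 a2 a (tE a1 a2 a (W (Suc n))) p + tH a1 a2 a (W (Suc n)) p)" for p
    using t_comm[of a1 a2 a "W (Suc n)" p] by (simp add: algebra_simps)
  also have "\<dots> p = inverse (fL (- int (Suc n))) * (eL (- int n - 1) * fL (- int n) + (of_real l - 2 * of_nat (Suc n))) * W (Suc n) p" for p
    unfolding Suc tF_scale W_H W_F by (simp add: algebra_simps)
  also have "\<dots> p = eL (- int (Suc n) - 1) * W (Suc n) p" for p
  proof -
    have nz: "fL (- int (Suc n)) \<noteq> 0" by (rule fL_nz)
    have "eL (- int n - 1) * fL (- int n) + (of_real l - 2 * of_nat (Suc n)) = eL (- int (Suc n) - 1) * fL (- int (Suc n))"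
      using lneg by (auto simp: eF_real0 eE_real0 algebra_simps)
    then show ?thesis using nz by (simp add: field_simps)
  qed
  finally show ?case by auto
qed

lemma W_nz: "W n \<noteq> (\<lambda>p. 0)"
proof (induction n)
  case 0 then show ?case using unz by simp
next
  case (Suc n)
  show ?case
  proof
    assume "W (Suc n) = (\<lambda>p. 0)"
    then have "tE a1 a2 a (W (Suc n)) = (\<lambda>p. 0)" using tE_zero by simp
    then have "\<forall>p. eL (- int n - 1) * W n p = 0" using W_E[of n] by metis
    then have "W n = (\<lambda>p. 0)" using eL_nz[of n] by auto
    with Suc show False by simp
  qed
qed

lemma W_disj: "W n p \<noteq> 0 \<Longrightarrow> W n' p \<noteq> 0 \<Longrightarrow> n = n'"
proof -
  assume h: "W n p \<noteq> 0" "W n' p \<noteq> 0"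
  obtain k m where p: "p = (k, m)" by (cases p)
  have "of_real l - 2 * of_nat n = a1 - a2 + of_real a + 2 * of_int (k + m)"
    using weight_support[OF W_FS W_H] h p by blast
  moreover have "of_real l - 2 * of_nat n' = a1 - a2 + of_real a + 2 * of_int (k + m)"
    using weight_support[OF W_FS W_H] h p by blast
  ultimately have e: "complex_of_real l - 2 * of_nat n = complex_of_real l - 2 * of_nat n'" by simp
  then have "(of_nat (2 * n) :: complex) = of_nat (2 * n')" by simp
  then have "2 * n = 2 * n'" by (simp only: of_nat_eq_iff)
  then show "n = n'" by simp
qed

end

lemma norm_sum_disj:
  fixes f :: "'i \<Rightarrow> complex"
  assumes "finite S" "\<And>i j. i \<in> S \<Longrightarrow> j \<in> S \<Longrightarrow> i \<noteq> j \<Longrightarrow> f i = 0 \<or> f j = 0"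
  shows "(cmod (sum f S))\<^sup>2 = (\<Sum>i\<in>S. (cmod (f i))\<^sup>2)"
proof (cases "\<exists>i\<in>S. f i \<noteq> 0")
  case False then show ?thesis by simp
next
  case True
  then obtain i where i: "i \<in> S" "f i \<noteq> 0" by blast
  have z: "j \<in> S - {i} \<Longrightarrow> f j = 0" for j using assms(2)[of i j] i by auto
  have "sum f S = f i + sum f (S - {i})" using assms(1) i(1) by (simp add: sum.remove)
  also have "sum f (S - {i}) = 0" using z by simp
  finally have a: "sum f S = f i" by simp
  have "(\<Sum>j\<in>S. (cmod (f j))\<^sup>2) = (cmod (f i))\<^sup>2 + (\<Sum>j\<in>S - {i}. (cmod (f j))\<^sup>2)"
    using assms(1) i(1) by (simp add: sum.remove)
  also have "(\<Sum>j\<in>S - {i}. (cmod (f j))\<^sup>2) = 0" using z by simp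
  finally show ?thesis using a by simp
qed

lemma summable_on_finsum:
  fixes f :: "'i \<Rightarrow> 'a \<Rightarrow> real"
  assumes "finite S" "\<And>i. i \<in> S \<Longrightarrow> f i summable_on A"
  shows "(\<lambda>x. \<Sum>i\<in>S. f i x) summable_on A"
  using assms
proof (induction S rule: finite_induct)
  case empty then show ?case by simp
next
  case (insert i S)
  then show ?case by (simp add: summable_on_add)
qed

context hwv
begin

definition phi :: "(int \<Rightarrow> complex) \<Rightarrow> int \<times> int \<Rightarrow> complex" where
  "phi v = (\<lambda>p. \<Sum>k\<in>{k. v k \<noteq> 0}. v k * W (nat (- k)) p)"

lemma phi_alt:
  assumes "finite S" "{k. v k \<noteq> 0} \<subseteq> S"
  shows "phi v p = (\<Sum>k\<in>S. v k * W (nat (- k)) p)"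
  unfolding phi_def using assms by (intro sum.mono_neutral_left) auto

lemma K0: "Kset (of_real l) 0 = {k. k \<le> 0}" using Kset_real0[OF lneg] .

lemma Nel_D: "v \<in> Nel (of_real l) 0 \<Longrightarrow> finite {k. v k \<noteq> 0} \<and> (\<forall>k. v k \<noteq> 0 \<longrightarrow> k \<le> 0)"
  unfolding Nel_def K0 by auto

lemma phi_add:
  assumes "v \<in> Nel (of_real l) 0" "w \<in> Nel (of_real l) 0"
  shows "phi (\<lambda>k. v k + w k) = (\<lambda>p. phi v p + phi w p)"
proof
  fix p
  define S where "S = {k. v k \<noteq> 0} \<union> {k. w k \<noteq> 0}"
  have S: "finite S" using Nel_D[OF assms(1)] Nel_D[OF assms(2)] S_def by auto
  have s1: "{k. v k \<noteq> 0} \<subseteq> S" "{k. w k \<noteq> 0} \<subseteq> S" "{k. v k + w k \<noteq> 0} \<subseteq> S"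
    unfolding S_def by auto
  show "phi (\<lambda>k. v k + w k) p = phi v p + phi w p"
    unfolding phi_alt[OF S s1(1)] phi_alt[OF S s1(2)] phi_alt[OF S s1(3)]
    by (simp add: sum.distrib algebra_simps)
qed

lemma phi_scale:
  assumes "v \<in> Nel (of_real l) 0"
  shows "phi (\<lambda>k. c * v k) = (\<lambda>p. c * phi v p)"
proof
  fix p
  define S where "S = {k. v k \<noteq> 0}"
  have S: "finite S" using Nel_D[OF assms(1)] S_def by auto
  show "phi (\<lambda>k. c * v k) p = c * phi v p"
    using phi_alt[OF S, of v p] phi_alt[OF S, of "\<lambda>k. c * v k" p]
    by (auto simp: S_def sum_distrib_left algebra_simps)
qed

lemma tE_W: "tE a1 a2 a (W n) p = (if n = 0 then 0 else eL (- int n) * W (n - 1) p)"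
proof (cases n)
  case 0 then show ?thesis using W_E0 by simp
next
  case (Suc m)
  have h: "tE a1 a2 a (W (Suc m)) p = eL (- int m - 1) * W m p" by (simp only: W_E)
  have e: "- int n = - int m - 1" "n - 1 = m" "n \<noteq> 0" using Suc by auto
  have "(if n = 0 then 0 else eL (- int n) * W (n - 1) p) = eL (- int m - 1) * W m p"
    by (simp only: e if_False)
  then show ?thesis using h by (simp only: Suc)
qed

lemma phi_F:
  assumes "v \<in> Nel (of_real l) 0"
  shows "phi (actF (of_real l) 0 v) = tF a1 a2 a (phi v)"
proof
  fix p
  define S where "S = {k. v k \<noteq> 0}"
  have S: "finite S" using Nel_D[OF assms(1)] S_def by auto
  have neg: "k \<in> S \<Longrightarrow> k \<le> 0" for k using Nel_D[OF assms(1)] S_def by auto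
  have aF: "actF (of_real l) 0 v k = (if k \<le> 0 then fL (k + 1) * v (k + 1) else 0)" for k
    unfolding actF_def K0 by simp
  have sub: "{k. actF (of_real l) 0 v k \<noteq> 0} \<subseteq> (\<lambda>k. k - 1) ` S"
  proof
    fix k assume "k \<in> {k. actF (of_real l) 0 v k \<noteq> 0}"
    then have "k + 1 \<in> S" unfolding aF S_def by (auto split: if_splits)
    then show "k \<in> (\<lambda>k. k - 1) ` S" by (intro image_eqI[of _ _ "k+1"]) auto
  qed
  have "phi (actF (of_real l) 0 v) p = (\<Sum>k\<in>(\<lambda>k. k - 1) ` S. actF (of_real l) 0 v k * W (nat (- k)) p)"
    using S sub by (intro phi_alt) auto
  also have "\<dots> = (\<Sum>k\<in>S. actF (of_real l) 0 v (k - 1) * W (nat (- (k - 1))) p)"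
    by (subst sum.reindex) (auto simp: inj_on_def)
  also have "\<dots> = (\<Sum>k\<in>S. v k * tF a1 a2 a (W (nat (- k))) p)"
  proof (rule sum.cong[OF refl])
    fix k assume k: "k \<in> S"
    then have "k \<le> 0" by (rule neg)
    then have e: "nat (- (k - 1)) = Suc (nat (- k))" "- int (nat (- k)) = k" by auto
    show "actF (of_real l) 0 v (k - 1) * W (nat (- (k - 1))) p = v k * tF a1 a2 a (W (nat (- k))) p"
      unfolding W_F e aF using \<open>k \<le> 0\<close> by simp
  qed
  also have "\<dots> = tF a1 a2 a (phi v) p"
    unfolding phi_alt[OF S, of v, unfolded S_def, OF order_refl] S_def tF_sum
    by (simp add: tF_scale)
  finally show "phi (actF (of_real l) 0 v) p = tF a1 a2 a (phi v) p" .
qed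

lemma phi_E:
  assumes "v \<in> Nel (of_real l) 0"
  shows "phi (actE (of_real l) 0 v) = tE a1 a2 a (phi v)"
proof
  fix p
  define S where "S = {k. v k \<noteq> 0}"
  have S: "finite S" using Nel_D[OF assms(1)] S_def by auto
  have neg: "k \<in> S \<Longrightarrow> k \<le> 0" for k using Nel_D[OF assms(1)] S_def by auto
  have aE: "actE (of_real l) 0 v k = (if k \<le> 0 then eL (k - 1) * v (k - 1) else 0)" for k
    unfolding actE_def K0 by simp
  have sub: "{k. actE (of_real l) 0 v k \<noteq> 0} \<subseteq> (\<lambda>k. k + 1) ` S"
  proof
    fix k assume "k \<in> {k. actE (of_real l) 0 v k \<noteq> 0}"
    then have "k - 1 \<in> S" unfolding aE S_def by (auto split: if_splits)
    then show "k \<in> (\<lambda>k. k + 1) ` S" by (intro image_eqI[of _ _ "k - 1"]) auto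
  qed
  have "phi (actE (of_real l) 0 v) p = (\<Sum>k\<in>(\<lambda>k. k + 1) ` S. actE (of_real l) 0 v k * W (nat (- k)) p)"
    using S sub by (intro phi_alt) auto
  also have "\<dots> = (\<Sum>k\<in>S. actE (of_real l) 0 v (k + 1) * W (nat (- (k + 1))) p)"
    by (subst sum.reindex) (auto simp: inj_on_def)
  also have "\<dots> = (\<Sum>k\<in>S. v k * tE a1 a2 a (W (nat (- k))) p)"
  proof (rule sum.cong[OF refl])
    fix k assume k: "k \<in> S"
    then have "k \<le> 0" by (rule neg)
    show "actE (of_real l) 0 v (k + 1) * W (nat (- (k + 1))) p = v k * tE a1 a2 a (W (nat (- k))) p"
    proof (cases "k = 0")
      case True then show ?thesis unfolding aE tE_W by simp
    next
      case False
      then have e: "nat (- (k + 1)) = nat (- k) - 1" "- int (nat (- k)) = k" "nat (- k) \<noteq> 0"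
        using \<open>k \<le> 0\<close> by auto
      show ?thesis unfolding tE_W e aE using \<open>k \<le> 0\<close> False by (simp add: e)
    qed
  qed
  also have "\<dots> = tE a1 a2 a (phi v) p"
    unfolding phi_alt[OF S, of v, unfolded S_def, OF order_refl] S_def tE_sum
    by (simp add: tE_scale)
  finally show "phi (actE (of_real l) 0 v) p = tE a1 a2 a (phi v) p" .
qed

lemma phi_H:
  assumes "v \<in> Nel (of_real l) 0"
  shows "phi (actH (of_real l) 0 v) = tH a1 a2 a (phi v)"
proof
  fix p
  define S where "S = {k. v k \<noteq> 0}"
  have S: "finite S" using Nel_D[OF assms(1)] S_def by auto
  have neg: "k \<in> S \<Longrightarrow> k \<le> 0" for k using Nel_D[OF assms(1)] S_def by auto
  have aH: "actH (of_real l) 0 v k = (if k \<le> 0 then hw (of_real l) 0 k * v k else 0)" for k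
    unfolding actH_def K0 by simp
  have sub: "{k. actH (of_real l) 0 v k \<noteq> 0} \<subseteq> S"
    unfolding aH S_def by auto
  have "phi (actH (of_real l) 0 v) p = (\<Sum>k\<in>S. actH (of_real l) 0 v k * W (nat (- k)) p)"
    using S sub by (intro phi_alt) auto
  also have "\<dots> = (\<Sum>k\<in>S. v k * tH a1 a2 a (W (nat (- k))) p)"
  proof (rule sum.cong[OF refl])
    fix k assume k: "k \<in> S"
    then have "k \<le> 0" by (rule neg)
    then have e: "of_nat (nat (- k)) = (- of_int k :: complex)" by simp
    show "actH (of_real l) 0 v k * W (nat (- k)) p = v k * tH a1 a2 a (W (nat (- k))) p"
      unfolding W_H aH using \<open>k \<le> 0\<close> by (simp add: e hw_def algebra_simps)
  qed
  also have "\<dots> = tH a1 a2 a (phi v) p"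
    unfolding phi_alt[OF S, of v, unfolded S_def, OF order_refl] S_def tH_sum
    by (simp add: tH_scale)
  finally show "phi (actH (of_real l) 0 v) p = tH a1 a2 a (phi v) p" .
qed

lemma phi_FS:
  assumes "v \<in> Nel (of_real l) 0"
  shows "phi v \<in> FS a1 a2 a"
  using W_FS unfolding FS_def phi_def by auto

lemma phi_zero:
  assumes "v \<in> Nel (of_real l) 0" "phi v = (\<lambda>p. 0)"
  shows "v = (\<lambda>k. 0)"
proof (rule ccontr)
  assume "v \<noteq> (\<lambda>k. 0)"
  then obtain k where k: "v k \<noteq> 0" by auto
  define S where "S = {k. v k \<noteq> 0}"
  have S: "finite S" using Nel_D[OF assms(1)] S_def by auto
  have neg: "j \<in> S \<Longrightarrow> j \<le> 0" for j using Nel_D[OF assms(1)] S_def by auto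
  have "\<exists>p. W (nat (- k)) p \<noteq> 0"
  proof (rule ccontr)
    assume "\<not> ?thesis"
    then have "W (nat (- k)) = (\<lambda>p. 0)" by auto
    with W_nz show False by blast
  qed
  then obtain p where p: "W (nat (- k)) p \<noteq> 0" by blast
  have kS: "k \<in> S" using k S_def by simp
  have "phi v p = (\<Sum>j\<in>S. v j * W (nat (- j)) p)" using phi_alt[OF S, of v p] S_def by simp
  also have "\<dots> = v k * W (nat (- k)) p + (\<Sum>j\<in>S - {k}. v j * W (nat (- j)) p)"
    using S kS by (simp add: sum.remove)
  also have "(\<Sum>j\<in>S - {k}. v j * W (nat (- j)) p) = 0"
  proof (rule sum.neutral, rule ballI)
    fix j assume j: "j \<in> S - {k}"
    have "nat (- j) \<noteq> nat (- k)" using j neg[of j] neg[OF kS] by auto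
    then have "W (nat (- j)) p = 0" using W_disj[of "nat (-j)" p "nat (-k)"] p by auto
    then show "v j * W (nat (- j)) p = 0" by simp
  qed
  finally have "phi v p \<noteq> 0" using k p by simp
  with assms(2) show False by simp
qed

lemma phi_inj: "inj_on phi (Nel (of_real l) 0)"
proof (rule inj_onI)
  fix v w assume v: "v \<in> Nel (of_real l) 0" and w: "w \<in> Nel (of_real l) 0" and e: "phi v = phi w"
  have mw: "(\<lambda>k. (-1) * w k) \<in> Nel (of_real l) 0" using w unfolding Nel_def by auto
  have d: "(\<lambda>k. v k + (-1) * w k) \<in> Nel (of_real l) 0" using v w unfolding Nel_def
    by (auto intro: finite_subset[of _ "{k. v k \<noteq> 0} \<union> {k. w k \<noteq> 0}"])
  have "phi (\<lambda>k. v k + (-1) * w k) = (\<lambda>p. phi v p + (-1) * phi w p)"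
    using phi_add[OF v mw] phi_scale[OF w, of "-1"] by simp
  also have "\<dots> = (\<lambda>p. 0)" using e by simp
  finally have "(\<lambda>k. v k + (-1) * w k) = (\<lambda>k. 0)" by (rule phi_zero[OF d])
  then show "v = w" by (auto simp: fun_eq_iff)
qed

lemma phi_inV:
  assumes "v \<in> Nel (of_real l) 0" "\<And>n. inV a1 a2 a (W n)"
  shows "inV a1 a2 a (phi v)"
proof -
  define S where "S = {k. v k \<noteq> 0}"
  have S: "finite S" using Nel_D[OF assms(1)] S_def by auto
  define N where "N = (\<lambda>(k::int, m::int). Re (xnorm2 a1 a2 k) * ynorm2 a (nat (- m)))"
  have T: "(\<lambda>(k, m). (cmod (phi v (k, m)))\<^sup>2 * Re (xnorm2 a1 a2 k) * ynorm2 a (nat (- m)))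
        = (\<lambda>q. \<Sum>j\<in>S. (cmod (v j))\<^sup>2 * ((\<lambda>(k, m). (cmod (W (nat (- j)) (k, m)))\<^sup>2 * Re (xnorm2 a1 a2 k) * ynorm2 a (nat (- m))) q))"
  proof
    fix q :: "int \<times> int"
    obtain k m where q: "q = (k, m)" by (cases q)
    have neg: "j \<in> S \<Longrightarrow> j \<le> 0" for j using Nel_D[OF assms(1)] S_def by auto
    have "(cmod (phi v (k, m)))\<^sup>2 = (\<Sum>j\<in>S. (cmod (v j * W (nat (- j)) (k, m)))\<^sup>2)"
      unfolding phi_alt[OF S, of v, unfolded S_def, OF order_refl] S_def[symmetric]
    proof (rule norm_sum_disj[OF S])
      fix i j assume ij: "i \<in> S" "j \<in> S" "i \<noteq> j"
      then have "nat (- i) \<noteq> nat (- j)" using neg[OF ij(1)] neg[OF ij(2)] by auto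
      then show "v i * W (nat (- i)) (k, m) = 0 \<or> v j * W (nat (- j)) (k, m) = 0"
        using W_disj by auto
    qed
    then show "(case q of (k, m) \<Rightarrow> (cmod (phi v (k, m)))\<^sup>2 * Re (xnorm2 a1 a2 k) * ynorm2 a (nat (- m)))
      = (\<Sum>j\<in>S. (cmod (v j))\<^sup>2 * (case q of (k, m) \<Rightarrow> (cmod (W (nat (- j)) (k, m)))\<^sup>2 * Re (xnorm2 a1 a2 k) * ynorm2 a (nat (- m))))"
      unfolding q by (simp add: sum_distrib_left sum_distrib_right norm_mult power_mult_distrib algebra_simps)
  qed
  have "(\<lambda>q. \<Sum>j\<in>S. (cmod (v j))\<^sup>2 * ((\<lambda>(k, m). (cmod (W (nat (- j)) (k, m)))\<^sup>2 * Re (xnorm2 a1 a2 k) * ynorm2 a (nat (- m))) q)) summable_on UNIV"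
    using assms(2) S unfolding inV_def by (intro summable_on_finsum summable_on_cmult_right) auto
  then show ?thesis unfolding inV_def using phi_FS[OF assms(1)] T by simp
qed

lemma hilb_sub_main:
  assumes "\<And>n. inV a1 a2 a (W n)"
  shows "hilb_sub (of_real l) a1 a2 a"
  unfolding hilb_sub_def
  using phi_add phi_scale phi_E phi_F phi_H phi_inj phi_FS phi_inV[OF _ assms]
  by blast

end

definition Tw :: "complex \<Rightarrow> complex \<Rightarrow> real \<Rightarrow> (int \<times> int \<Rightarrow> complex) \<Rightarrow> int \<Rightarrow> nat \<Rightarrow> real" where
  "Tw a1 a2 a w d j = (cmod (w (d + int j, - int j)))\<^sup>2 * Re (xnorm2 a1 a2 (d + int j)) * ynorm2 a j"

lemma K2_form: "a < 0 \<Longrightarrow> Kset (of_real a) 0 = {m. m \<le> 0}"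
  by (rule Kset_real0)

lemma Tw_nonneg:
  assumes "hypA a1 a2" "a < 0" "w \<in> FS a1 a2 a"
  shows "Tw a1 a2 a w d j \<ge> 0"
proof (cases "w (d + int j, - int j) = 0")
  case True then show ?thesis by (simp add: Tw_def)
next
  case False
  then have "d + int j \<in> Kset a1 a2" using assms(3) unfolding FS_def by blast
  then have "Re (xnorm2 a1 a2 (d + int j)) > 0" using F1[OF assms(1)] by blast
  then show ?thesis using ynorm2_pos[OF assms(2), of j] by (simp add: Tw_def)
qed

lemma inV_diag:
  assumes "hypA a1 a2" "a < 0" "w \<in> FS a1 a2 a" "\<And>k m. w (k, m) \<noteq> 0 \<Longrightarrow> k + m = d"
  shows "inV a1 a2 a w \<longleftrightarrow> summable (Tw a1 a2 a w d)"
proof -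
  define f where "f = (\<lambda>(k, m). (cmod (w (k, m)))\<^sup>2 * Re (xnorm2 a1 a2 k) * ynorm2 a (nat (- m)))"
  define P where "P = (\<lambda>j::nat. (d + int j, - int j))"
  have z: "f x = 0" if "x \<notin> range P" for x
  proof -
    obtain k m where x: "x = (k, m)" by (cases x)
    show ?thesis
    proof (cases "w (k, m) = 0")
      case True then show ?thesis by (simp add: f_def x)
    next
      case False
      then have "m \<in> Kset (of_real a) 0" using assms(3) unfolding FS_def by blast
      then have "m \<le> 0" using K2_form[OF assms(2)] by simp
      moreover have "k + m = d" using assms(4) False by blast
      ultimately have "x = P (nat (- m))" unfolding P_def x by auto
      with that show ?thesis by simp
    qed
  qed
  have "f summable_on UNIV \<longleftrightarrow> f summable_on range P"
    by (rule summable_on_cong_neutral) (use z in auto)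
  also have "\<dots> \<longleftrightarrow> (f \<circ> P) summable_on UNIV"
    by (rule summable_on_reindex) (auto simp: inj_on_def P_def)
  also have "f \<circ> P = Tw a1 a2 a w d"
    by (auto simp: f_def P_def Tw_def fun_eq_iff)
  also have "Tw a1 a2 a w d summable_on UNIV \<longleftrightarrow> summable (Tw a1 a2 a w d)"
    by (rule summable_on_UNIV_nonneg_real_iff) (rule Tw_nonneg[OF assms(1-3)])
  finally show ?thesis unfolding inV_def f_def using assms(3) by simp
qed

lemma poch_asymp:
  fixes z :: complex
  assumes "z \<notin> \<int>\<^sub>\<le>\<^sub>0"
  shows "(\<lambda>n. cmod (pochhammer z n) / (fact n * real n powr (Re z - 1))) \<longlonglongrightarrow> cmod (rGamma z)"
proof -
  have lim1: "(\<lambda>n. cmod (rGamma_series z n) / cmod (z / of_nat n + 1)) \<longlonglongrightarrow> cmod (rGamma z) / cmod (0 + 1)"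
    by (intro tendsto_intros rGamma_series_LIMSEQ lim_const_over_n) simp
  have ev: "eventually (\<lambda>n. cmod (rGamma_series z n) / cmod (z / of_nat n + 1) =
      cmod (pochhammer z n) / (fact n * real n powr (Re z - 1))) sequentially"
    using eventually_gt_at_top[of "0::nat"]
  proof eventually_elim
    case (elim n)
    then have n: "real n > 0" by simp
    have zn: "z + of_nat n \<noteq> 0"
    proof
      assume "z + of_nat n = 0"
      then have "z = - of_nat n" by (simp add: eq_neg_iff_add_eq_0)
      with assms show False by auto
    qed
    have e1: "cmod (exp (z * of_real (ln (real n)))) = real n powr Re z"
      using n by (simp add: powr_def)
    have e2: "cmod (z / of_nat n + 1) = cmod (z + of_nat n) / real n"
    proof -
      have "z / of_nat n + 1 = (z + of_nat n) / of_nat n" using n by (simp add: field_simps)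
      then show ?thesis by (simp add: norm_divide)
    qed
    have e3: "real n powr (Re z - 1) = real n powr Re z / real n"
      using n by (simp add: powr_diff)
    have "cmod (rGamma_series z n) = cmod (pochhammer z n) * cmod (z + of_nat n) / (fact n * real n powr Re z)"
      unfolding rGamma_series_def using e1 by (simp add: pochhammer_Suc norm_mult norm_divide)
    then show ?case unfolding e2 e3 using n zn by (simp add: field_simps)
  qed
  show ?thesis using Lim_transform_eventually[OF lim1 ev] by simp
qed

lemma summable_iff_powr:
  fixes t :: "nat \<Rightarrow> real"
  assumes nn: "\<And>j. t j \<ge> 0" and lim: "(\<lambda>j. t j / real j powr e) \<longlonglongrightarrow> L" and L: "L > 0"
  shows "summable t \<longleftrightarrow> e < -1"
proof -
  have ev1: "eventually (\<lambda>j. t j / real j powr e > L / 2) sequentially"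
    using lim L by (intro order_tendstoD) auto
  have ev2: "eventually (\<lambda>j. t j / real j powr e < 2 * L) sequentially"
    using lim L by (intro order_tendstoD) auto
  have up: "eventually (\<lambda>j. norm (t j) \<le> 2 * L * real j powr e) sequentially"
    using ev2 eventually_gt_at_top[of "0::nat"]
  proof eventually_elim
    case (elim j)
    then have p: "real j powr e > 0" by simp
    with elim show ?case using nn[of j] by (simp add: field_simps)
  qed
  have lo: "eventually (\<lambda>j. norm (L / 2 * real j powr e) \<le> t j) sequentially"
    using ev1 eventually_gt_at_top[of "0::nat"]
  proof eventually_elim
    case (elim j)
    then have p: "real j powr e > 0" by simp
    with elim L show ?case by (simp add: field_simps abs_mult)
  qed
  show ?thesis
  proof
    assume "summable t"
    then have "summable (\<lambda>j. L / 2 * real j powr e)"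
      by (rule summable_comparison_test_ev[OF lo])
    then have "summable (\<lambda>j. real j powr e)" using L by simp
    then show "e < -1" using summable_real_powr_iff by simp
  next
    assume "e < -1"
    then have "summable (\<lambda>j. 2 * L * real j powr e)" using summable_real_powr_iff by simp
    then show "summable t" by (rule summable_comparison_test_ev[OF up])
  qed
qed

lemma asymp3:
  fixes z1 z2 :: complex and x C :: real
  assumes z1: "z1 \<notin> \<int>\<^sub>\<le>\<^sub>0" and z2: "z2 \<notin> \<int>\<^sub>\<le>\<^sub>0" and x: "x > 0" and C: "C > 0"
    and t: "\<And>j. t j = C * cmod (pochhammer z1 j) * cmod (pochhammer z2 j) / (fact j * pochhammer x j)"
  shows "summable t \<longleftrightarrow> Re z1 + Re z2 - x - 1 < -1"
proof (rule summable_iff_powr)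
  show "t j \<ge> 0" for j unfolding t using C x pochhammer_pos[OF x, of j] by (auto intro!: divide_nonneg_pos mult_pos_pos)
  have zx: "complex_of_real x \<notin> \<int>\<^sub>\<le>\<^sub>0"
  proof
    assume "complex_of_real x \<in> \<int>\<^sub>\<le>\<^sub>0"
    then obtain n where "complex_of_real x = of_int n" "n \<le> 0" by (auto elim!: nonpos_Ints_cases)
    then have "Re (complex_of_real x) = Re (of_int n)" by simp
    then have "x = of_int n" by simp
    with x \<open>n \<le> 0\<close> show False by simp
  qed
  have L3: "rGamma (complex_of_real x) \<noteq> 0" using zx by (simp add: rGamma_eq_zero_iff)
  have lim: "(\<lambda>n. C * (cmod (pochhammer z1 n) / (fact n * real n powr (Re z1 - 1))) *
      (cmod (pochhammer z2 n) / (fact n * real n powr (Re z2 - 1))) /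
      (cmod (pochhammer (complex_of_real x) n) / (fact n * real n powr (Re (complex_of_real x) - 1))))
    \<longlonglongrightarrow> C * cmod (rGamma z1) * cmod (rGamma z2) / cmod (rGamma (complex_of_real x))"
    using L3 by (intro tendsto_intros poch_asymp z1 z2 zx) auto
  show "C * cmod (rGamma z1) * cmod (rGamma z2) / cmod (rGamma (complex_of_real x)) > 0"
    using C L3 z1 z2 by (simp add: rGamma_eq_zero_iff)
  have ev: "eventually (\<lambda>n. C * (cmod (pochhammer z1 n) / (fact n * real n powr (Re z1 - 1))) *
      (cmod (pochhammer z2 n) / (fact n * real n powr (Re z2 - 1))) /
      (cmod (pochhammer (complex_of_real x) n) / (fact n * real n powr (Re (complex_of_real x) - 1)))
      = t n / real n powr (Re z1 + Re z2 - x - 1)) sequentially"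
    using eventually_gt_at_top[of "0::nat"]
  proof eventually_elim
    case (elim n)
    then have n: "real n > 0" by simp
    have px: "pochhammer x n > 0" using x by (rule pochhammer_pos)
    have cx: "cmod (pochhammer (complex_of_real x) n) = pochhammer x n"
      using px by (simp add: pochhammer_of_real)
    have pw: "real n powr (Re z1 + Re z2 - x - 1) = real n powr (Re z1 - 1) * real n powr (Re z2 - 1) / real n powr (x - 1)"
      using n by (simp add: powr_add[symmetric] powr_diff[symmetric] algebra_simps)
    show ?case unfolding t cx pw using px n by (simp add: field_simps)
  qed
  show "(\<lambda>j. t j / real j powr (Re z1 + Re z2 - x - 1)) \<longlonglongrightarrow> C * cmod (rGamma z1) * cmod (rGamma z2) / cmod (rGamma (complex_of_real x))"
    using Lim_transform_eventually[OF lim ev] .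
qed

primrec Useq :: "complex \<Rightarrow> complex \<Rightarrow> real \<Rightarrow> int \<Rightarrow> nat \<Rightarrow> complex" where
  "Useq a1 a2 a n0 0 = 1"
| "Useq a1 a2 a n0 (Suc j) = - eE a1 a2 (n0 + int j) / eE (of_real a) 0 (- int j - 1) * Useq a1 a2 a n0 j"

definition uvec :: "complex \<Rightarrow> complex \<Rightarrow> real \<Rightarrow> int \<Rightarrow> int \<times> int \<Rightarrow> complex" where
  "uvec a1 a2 a n0 = (\<lambda>(k, m). if k + m = n0 \<and> m \<le> 0 then Useq a1 a2 a n0 (nat (- m)) else 0)"

lemma K1_shift: "hypA a1 a2 \<Longrightarrow> n0 \<in> Kset a1 a2 \<Longrightarrow> n0 + int j \<in> Kset a1 a2"
proof (induction j)
  case 0 then show ?case by simp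
next
  case (Suc j)
  then have "n0 + int j + 1 \<in> Kset a1 a2" using F0 by blast
  moreover have "n0 + int (Suc j) = n0 + int j + 1" by simp
  ultimately show ?case by metis
qed

lemma K1_shift1: "hypA a1 a2 \<Longrightarrow> n0 \<in> Kset a1 a2 \<Longrightarrow> n0 + int j + 1 \<in> Kset a1 a2"
  using F0 K1_shift by blast

lemma uvec_pt: "uvec a1 a2 a n0 (n0 + int j, - int j) = Useq a1 a2 a n0 j"
  by (simp add: uvec_def)

lemma uvec_diag: "uvec a1 a2 a n0 (k, m) \<noteq> 0 \<Longrightarrow> k + m = n0"
  by (simp add: uvec_def split: if_splits)

context
  fixes a1 a2 :: complex and a :: real and n0 :: int
  assumes hyp: "hypA a1 a2" and aneg: "a < 0" and n0K: "n0 \<in> Kset a1 a2"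
begin

lemma uvec_FS: "uvec a1 a2 a n0 \<in> FS a1 a2 a"
  unfolding FS_def
proof (intro CollectI allI impI)
  fix k m assume h: "k \<notin> Kset a1 a2 \<or> m \<notin> Kset (of_real a) 0"
  show "uvec a1 a2 a n0 (k, m) = 0"
  proof (rule ccontr)
    assume nz: "uvec a1 a2 a n0 (k, m) \<noteq> 0"
    then have km: "k + m = n0" "m \<le> 0" by (auto simp: uvec_def split: if_splits)
    then have "k = n0 + int (nat (- m))" by simp
    then show False using K1_shift[OF hyp n0K, of "nat (- m)"] km K2_form[OF aneg] h by auto
  qed
qed

lemma uvec_E: "tE a1 a2 a (uvec a1 a2 a n0) = (\<lambda>p. 0)"
proof
  fix p :: "int \<times> int"
  obtain k m where p: "p = (k, m)" by (cases p)
  show "tE a1 a2 a (uvec a1 a2 a n0) p = 0"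
  proof (cases "m \<le> 0 \<and> k + m = n0 + 1")
    case True
    define j where "j = nat (- m)"
    have m: "m = - int j" using True j_def by simp
    have k: "k = n0 + int j + 1" using True m by simp
    have kK: "k \<in> Kset a1 a2" using K1_shift1[OF hyp n0K, of j] k by simp
    have mK: "m \<in> Kset (of_real a) 0" using True K2_form[OF aneg] by simp
    have u1: "uvec a1 a2 a n0 (k - 1, m) = Useq a1 a2 a n0 j" using k m by (simp add: uvec_def)
    have u2: "uvec a1 a2 a n0 (k, m - 1) = Useq a1 a2 a n0 (Suc j)"
    proof -
      have "nat (- (m - 1)) = Suc j" using m by simp
      then show ?thesis using k m by (simp add: uvec_def)
    qed
    have e: "k - 1 = n0 + int j" "m - 1 = - int j - 1" using k m by simp_all
    have nz: "eE (of_real a) 0 (- int j - 1) \<noteq> 0" by (rule e2_nz[OF aneg])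
    show ?thesis unfolding p tE_pt u1 u2 using kK mK nz by (simp add: e)
  next
    case False
    have u1: "uvec a1 a2 a n0 (k - 1, m) = 0" using False by (auto simp: uvec_def)
    have u2: "m \<in> Kset (of_real a) 0 \<Longrightarrow> uvec a1 a2 a n0 (k, m - 1) = 0"
      using False K2_form[OF aneg] by (auto simp: uvec_def)
    show ?thesis unfolding p tE_pt u1 using u2 by auto
  qed
qed

lemma uvec_H: "tH a1 a2 a (uvec a1 a2 a n0) = (\<lambda>p. (a1 - a2 + of_real a + 2 * of_int n0) * uvec a1 a2 a n0 p)"
proof
  fix p :: "int \<times> int"
  obtain k m where p: "p = (k, m)" by (cases p)
  show "tH a1 a2 a (uvec a1 a2 a n0) p = (a1 - a2 + of_real a + 2 * of_int n0) * uvec a1 a2 a n0 p"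
  proof (cases "uvec a1 a2 a n0 (k, m) = 0")
    case True then show ?thesis unfolding p tH_on_FS[OF uvec_FS] by simp
  next
    case False
    then have "k + m = n0" by (rule uvec_diag)
    then have "(of_int n0 :: complex) = of_int k + of_int m" by (metis of_int_add)
    then show ?thesis unfolding p tH_on_FS[OF uvec_FS] by (simp add: hw_def algebra_simps)
  qed
qed

lemma uvec_nz: "uvec a1 a2 a n0 \<noteq> (\<lambda>p. 0)"
proof
  assume "uvec a1 a2 a n0 = (\<lambda>p. 0)"
  then have "uvec a1 a2 a n0 (n0 + int 0, - int 0) = 0" by simp
  then show False unfolding uvec_pt by simp
qed

abbreviation "tu \<equiv> Tw a1 a2 a (uvec a1 a2 a n0) n0"

lemma Tw_u_rec:
  "tu (Suc j) = tu j * Re (qq a1 a2 (n0 + int j + 1)) / ((real j + 1) * (real j - a))"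
proof -
  define k where "k = n0 + int j + 1"
  have kK: "k \<in> Kset a1 a2" using K1_shift1[OF hyp n0K, of j] k_def by simp
  have kK1: "k - 1 \<in> Kset a1 a2" using K1_shift[OF hyp n0K, of j] k_def by simp
  define e1 where "e1 = eE a1 a2 (k - 1)"
  define f1 where "f1 = eF a1 a2 k"
  define e2 where "e2 = eE (of_real a) 0 (- int j - 1)"
  define f2 where "f2 = eF (of_real a) 0 (- int j)"
  define X1 where "X1 = Re (xnorm2 a1 a2 (k - 1))"
  define X2 where "X2 = Re (xnorm2 a1 a2 k)"
  define Y1 where "Y1 = ynorm2 a j"
  define Y2 where "Y2 = ynorm2 a (Suc j)"
  define Q where "Q = Re (qq a1 a2 k)"
  have R1: "cnj f1 * of_real X1 = - e1 * of_real X2"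
    unfolding f1_def e1_def X1_def X2_def by (rule F2[OF hyp kK kK1])
  have Q1: "e1 * f1 = - qq a1 a2 k" unfolding e1_def f1_def by (rule F3[OF hyp])
  have Qr: "qq a1 a2 k = of_real Q" using F4[OF hyp kK kK1] unfolding Q_def by (simp add: complex_eq_iff)
  have R2: "of_real Y2 * cnj f2 = - e2 * of_real Y1"
    unfolding Y1_def Y2_def e2_def f2_def by (rule Y_rel[OF aneg])
  have Q2: "e2 * f2 = of_real ((real j + 1) * (a - real j))"
    unfolding e2_def f2_def by (rule Y_prod[OF aneg])
  have "complex_of_real ((cmod e1)\<^sup>2 * X2) = e1 * cnj e1 * of_real X2"
    by (simp only: of_real_mult complex_norm_square)
  also have "\<dots> = - cnj e1 * (- e1 * of_real X2)" by simp
  also have "\<dots> = - cnj e1 * (cnj f1 * of_real X1)" by (simp only: R1)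
  also have "\<dots> = - cnj (e1 * f1) * of_real X1" by simp
  also have "\<dots> = of_real (Q * X1)" unfolding Q1 Qr by simp
  finally have A: "(cmod e1)\<^sup>2 * X2 = Q * X1" by (simp only: of_real_eq_iff)
  have "complex_of_real ((cmod e2)\<^sup>2 * Y1) = cnj e2 * (e2 * of_real Y1)"
    by (simp only: of_real_mult complex_norm_square mult.assoc mult.commute[of "cnj e2"])
  also have "\<dots> = - cnj e2 * (of_real Y2 * cnj f2)" by (simp add: R2)
  also have "\<dots> = - of_real Y2 * cnj (e2 * f2)" by simp
  also have "\<dots> = of_real ((real j + 1) * (real j - a) * Y2)" unfolding Q2 by (simp add: algebra_simps)
  finally have B: "(cmod e2)\<^sup>2 * Y1 = (real j + 1) * (real j - a) * Y2" by (simp only: of_real_eq_iff)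
  have e2nz: "e2 \<noteq> 0" unfolding e2_def by (rule e2_nz[OF aneg])
  have ja: "(real j + 1) * (real j - a) > 0" using aneg by (intro mult_pos_pos) auto
  have U: "Useq a1 a2 a n0 (Suc j) = - e1 / e2 * Useq a1 a2 a n0 j"
    unfolding e1_def e2_def k_def by simp
  have ek: "n0 + int (Suc j) = k" "n0 + int j = k - 1" by (simp_all add: k_def)
  have t1: "tu (Suc j) = (cmod (Useq a1 a2 a n0 (Suc j)))\<^sup>2 * X2 * Y2"
    unfolding Tw_def X2_def Y2_def uvec_pt by (simp only: ek)
  have t0: "tu j = (cmod (Useq a1 a2 a n0 j))\<^sup>2 * X1 * Y1"
    unfolding Tw_def X1_def Y1_def uvec_pt by (simp only: ek)
  have "tu (Suc j) = (cmod (Useq a1 a2 a n0 j))\<^sup>2 * ((cmod e1)\<^sup>2 * X2) * Y2 / (cmod e2)\<^sup>2"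
    unfolding t1 U by (simp add: norm_mult norm_divide power_mult_distrib power_divide)
  also have "\<dots> = (cmod (Useq a1 a2 a n0 j))\<^sup>2 * (Q * X1) * ((cmod e2)\<^sup>2 * Y1 / ((real j + 1) * (real j - a))) / (cmod e2)\<^sup>2"
    unfolding A B using ja aneg by simp
  also have "\<dots> = tu j * Q / ((real j + 1) * (real j - a))"
  proof -
    define D where "D = (real j + 1) * (real j - a)"
    define c where "c = (cmod e2)\<^sup>2"
    have c: "c \<noteq> 0" using e2nz c_def by simp
    have D: "D \<noteq> 0" using ja D_def by linarith
    show ?thesis unfolding t0 D_def[symmetric] c_def[symmetric] using c D by (simp add: field_simps)
  qed
  finally show ?thesis unfolding Q_def k_def .
qed

lemma Q_pos: "Re (qq a1 a2 (n0 + int i + 1)) > 0 \<and> qq a1 a2 (n0 + int i + 1) = of_real (Re (qq a1 a2 (n0 + int i + 1)))"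
proof -
  have kK: "n0 + int i + 1 \<in> Kset a1 a2" using K1_shift1[OF hyp n0K, of i] by simp
  have kK1: "n0 + int i + 1 - 1 \<in> Kset a1 a2" using K1_shift[OF hyp n0K, of i] by simp
  show ?thesis using F4[OF hyp kK kK1] by (simp add: complex_eq_iff)
qed

lemma Tw_u_closed:
  "tu j = Re (xnorm2 a1 a2 n0) * (\<Prod>i<j. Re (qq a1 a2 (n0 + int i + 1))) / (fact j * pochhammer (- a) j)"
proof (induction j)
  case 0 then show ?case by (simp add: Tw_def uvec_def ynorm2_0)
next
  case (Suc j)
  have p: "pochhammer (- a) (Suc j) = pochhammer (- a) j * (real j - a)" by (simp add: pochhammer_Suc)
  show ?case unfolding Tw_u_rec Suc p by (simp add: field_simps)
qed

lemma prod_qq: "(\<Prod>i<j. qq a1 a2 (n0 + int i + 1)) = pochhammer (of_int n0 - a2) j * pochhammer (of_int n0 + 1 + a1) j"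
  unfolding pochhammer_prod qq_def atLeast0LessThan prod.distrib[symmetric]
  by (intro prod.cong refl) (simp add: algebra_simps)

lemma summable_u: "summable tu \<longleftrightarrow> 2 * real_of_int n0 + Re a1 - Re a2 + a < -1"
proof -
  define P where "P = (\<lambda>j. \<Prod>i<j. Re (qq a1 a2 (n0 + int i + 1)))"
  have Ppos: "P j > 0" for j unfolding P_def using Q_pos by (intro prod_pos) auto
  have Pc: "complex_of_real (P j) = pochhammer (of_int n0 - a2) j * pochhammer (of_int n0 + 1 + a1) j" for j
  proof -
    have "complex_of_real (P j) = (\<Prod>i<j. qq a1 a2 (n0 + int i + 1))"
      unfolding P_def of_real_prod using Q_pos by (intro prod.cong refl) (metis)
    then show ?thesis using prod_qq by simp
  qed
  have Pm: "P j = cmod (pochhammer (of_int n0 - a2) j) * cmod (pochhammer (of_int n0 + 1 + a1) j)" for j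
  proof -
    have "cmod (complex_of_real (P j)) = P j" using Ppos[of j] by simp
    then show ?thesis unfolding Pc by (simp add: norm_mult)
  qed
  have nz: "z \<notin> \<int>\<^sub>\<le>\<^sub>0" if "\<And>j. pochhammer z j \<noteq> 0" for z :: complex
  proof
    assume "z \<in> \<int>\<^sub>\<le>\<^sub>0"
    then obtain m where "z = - of_nat m" by (auto elim: nonpos_Ints_cases')
    then have "pochhammer z (Suc m) = 0" by (auto simp: pochhammer_eq_0_iff)
    with that show False by blast
  qed
  have nzP: "pochhammer (of_int n0 - a2) j \<noteq> 0 \<and> pochhammer (of_int n0 + 1 + a1) j \<noteq> 0" for j
    using Pc[of j] Ppos[of j] by (metis mult_zero_left mult_zero_right of_real_eq_0_iff less_irrefl)
  have X0: "Re (xnorm2 a1 a2 n0) > 0" using F1[OF hyp n0K] by simp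
  have "summable tu \<longleftrightarrow> Re (of_int n0 - a2) + Re (of_int n0 + 1 + a1) - (- a) - 1 < -1"
    by (rule asymp3[OF nz nz _ X0]) (use nzP aneg Tw_u_closed Pm P_def in auto)
  then show ?thesis by (simp add: algebra_simps)
qed

end

lemma tele_summable:
  fixes TF TE T g :: "nat \<Rightarrow> real" and \<mu> c1 c0 :: real
  assumes nF: "\<And>j. TF j \<ge> 0" and nE: "\<And>j. TE j \<ge> 0" and nT: "\<And>j. T j \<ge> 0"
    and sE: "summable TE" and sT: "summable T"
    and id: "\<And>J. (\<Sum>j<Suc J. TF j) = (\<Sum>j<J. TE j) + g J * T J - \<mu> * (\<Sum>j<J. T j)"
    and gb: "\<And>J. \<bar>g J\<bar> \<le> c1 * real J + c0" and c1: "c1 \<ge> 0" and c0: "c0 \<ge> 0"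
  shows "summable TF"
proof -
  have ex: "\<exists>J\<ge>N. real J * T J \<le> 1" for N
  proof (rule ccontr)
    assume "\<not> ?thesis"
    then have h: "J \<ge> N \<Longrightarrow> real J * T J > 1" for J by force
    have "eventually (\<lambda>J. norm (inverse (real J)) \<le> T J) sequentially"
      using eventually_ge_at_top[of N]
    proof eventually_elim
      case (elim J)
      with h have hJ: "real J * T J > 1" by blast
      then have "J > 0" by (cases "J = 0") auto
      with hJ show ?case by (simp add: field_simps)
    qed
    then have "summable (\<lambda>J. inverse (real J))" by (rule summable_comparison_test_ev) (rule sT)
    with not_summable_harmonic show False by blast
  qed
  define M where "M = suminf TE + \<bar>\<mu>\<bar> * suminf T + c1 + c0 * suminf T"
  have bnd: "(\<Sum>j<Suc J. TF j) \<le> M" if "real J * T J \<le> 1" for J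
  proof -
    have a: "(\<Sum>j<J. TE j) \<le> suminf TE" using sE nE by (intro sum_le_suminf) auto
    have b: "(\<Sum>j<J. T j) \<le> suminf T" using sT nT by (intro sum_le_suminf) auto
    have b0: "0 \<le> (\<Sum>j<J. T j)" using nT by (intro sum_nonneg) auto
    have tj: "T J \<le> suminf T" using sum_le_suminf[OF sT, of "{J}"] nT by simp
    have "g J * T J \<le> \<bar>g J\<bar> * T J" using nT[of J] by (simp add: mult_right_mono)
    also have "\<dots> \<le> (c1 * real J + c0) * T J" using gb[of J] nT[of J] by (rule mult_right_mono)
    also have "\<dots> = c1 * (real J * T J) + c0 * T J" by (simp add: algebra_simps)
    also have "\<dots> \<le> c1 * 1 + c0 * suminf T"
      using that tj c1 c0 by (intro add_mono mult_left_mono) auto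
    finally have gT: "g J * T J \<le> c1 + c0 * suminf T" by simp
    have "- \<mu> * (\<Sum>j<J. T j) \<le> \<bar>\<mu>\<bar> * (\<Sum>j<J. T j)" using b0 by (intro mult_right_mono) auto
    also have "\<dots> \<le> \<bar>\<mu>\<bar> * suminf T" using b by (simp add: mult_left_mono)
    finally have mT: "- \<mu> * (\<Sum>j<J. T j) \<le> \<bar>\<mu>\<bar> * suminf T" .
    show ?thesis unfolding id M_def using a gT mT by linarith
  qed
  show ?thesis
  proof (rule bounded_imp_summable[OF nF])
    fix n
    obtain J where J: "J \<ge> n" "real J * T J \<le> 1" using ex by blast
    have "(\<Sum>k\<le>n. TF k) = (\<Sum>k<Suc n. TF k)" by (simp add: lessThan_Suc_atMost)
    also have "\<dots> \<le> (\<Sum>k<Suc J. TF k)" using J(1) nF by (intro sum_mono2) auto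
    also have "\<dots> \<le> M" using bnd[OF J(2)] .
    finally show "(\<Sum>k\<le>n. TF k) \<le> M" .
  qed
qed

lemma core_alg:
  fixes A B C D w1 w0 qc c X0 X1 Y0 Y1 :: complex
  assumes T1: "A * cnj A * X0 * w1 = qc * X1 * w1"
    and S1: "C * cnj C * X1 * w0 = qc * X0 * w0"
    and T4: "B * cnj B * Y1 = c * Y0"
    and S4: "D * cnj D * Y0 = c * Y1"
    and T2: "A * cnj B * X0 * Y1 * w1 * cnj w0 = cnj C * D * X1 * Y0 * w1 * cnj w0"
    and T3: "cnj A * B * X0 * Y1 * w0 * cnj w1 = C * cnj D * X1 * Y0 * w0 * cnj w1"
  shows "(A*w1 + B*w0) * cnj (A*w1 + B*w0) * X0 * Y1 = (C*w0 + D*w1) * cnj (C*w0 + D*w1) * X1 * Y0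
          + (qc - c) * (w1 * cnj w1 * X1 * Y1 - w0 * cnj w0 * X0 * Y0)"
proof -
  have "(A*w1 + B*w0) * cnj (A*w1 + B*w0) * X0 * Y1 - ((C*w0 + D*w1) * cnj (C*w0 + D*w1) * X1 * Y0
          + (qc - c) * (w1 * cnj w1 * X1 * Y1 - w0 * cnj w0 * X0 * Y0)) =
     cnj w1 * Y1 * (A * cnj A * X0 * w1 - qc * X1 * w1)
     + (A * cnj B * X0 * Y1 * w1 * cnj w0 - cnj C * D * X1 * Y0 * w1 * cnj w0)
     + (cnj A * B * X0 * Y1 * w0 * cnj w1 - C * cnj D * X1 * Y0 * w0 * cnj w1)
     + w0 * cnj w0 * X0 * (B * cnj B * Y1 - c * Y0)
     - cnj w0 * Y0 * (C * cnj C * X1 * w0 - qc * X0 * w0)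
     - w1 * cnj w1 * X1 * (D * cnj D * Y0 - c * Y1)"
    by (simp add: algebra_simps)
  also have "\<dots> = 0" unfolding T1 S1 T4 S4 T2 T3 by simp
  finally show ?thesis by simp
qed

context
  fixes a1 a2 :: complex and a :: real and w :: "int \<times> int \<Rightarrow> complex" and d :: int
  assumes hyp: "hypA a1 a2" and aneg: "a < 0" and wFS: "w \<in> FS a1 a2 a"
    and diag: "\<And>k m. w (k, m) \<noteq> 0 \<Longrightarrow> k + m = d"
begin

abbreviation "K1 \<equiv> Kset a1 a2"
abbreviation "Xr k \<equiv> complex_of_real (Re (xnorm2 a1 a2 k))"
abbreviation "Yc j \<equiv> complex_of_real (ynorm2 a j)"

lemma wK1: "w (k, m) \<noteq> 0 \<Longrightarrow> k \<in> K1"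
  using wFS unfolding FS_def by blast

lemma wK2: "w (k, 1) = 0"
  using wFS K2_form[OF aneg] unfolding FS_def by auto

lemma Afact:
  assumes "k \<in> K1"
  shows "(if k - 1 \<in> K1 then eF a1 a2 k else 0) * cnj (if k - 1 \<in> K1 then eF a1 a2 k else 0) * Xr (k - 1)
     = of_real (Re (qq a1 a2 k)) * Xr k"
proof (cases "k - 1 \<in> K1")
  case True
  have R1: "cnj (eF a1 a2 k) * Xr (k - 1) = - eE a1 a2 (k - 1) * Xr k" by (rule F2[OF hyp assms True])
  have Q1: "eE a1 a2 (k - 1) * eF a1 a2 k = - qq a1 a2 k" by (rule F3[OF hyp])
  have Qr: "qq a1 a2 k = of_real (Re (qq a1 a2 k))" using F4[OF hyp assms True] by (simp add: complex_eq_iff)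
  have "eF a1 a2 k * cnj (eF a1 a2 k) * Xr (k - 1) = eF a1 a2 k * (cnj (eF a1 a2 k) * Xr (k - 1))" by simp
  also have "\<dots> = - (eE a1 a2 (k - 1) * eF a1 a2 k) * Xr k" unfolding R1 by simp
  also have "\<dots> = of_real (Re (qq a1 a2 k)) * Xr k" unfolding Q1 using Qr by simp
  finally show ?thesis using True by simp
next
  case False
  then have "qq a1 a2 k = 0" using F5[OF hyp assms] by simp
  then show ?thesis using False by simp
qed

lemma Cfact:
  assumes "k \<in> K1" "k - 1 \<in> K1"
  shows "eE a1 a2 (k - 1) * cnj (eE a1 a2 (k - 1)) * Xr k = of_real (Re (qq a1 a2 k)) * Xr (k - 1)"
proof -
  have R1: "cnj (eF a1 a2 k) * Xr (k - 1) = - eE a1 a2 (k - 1) * Xr k" by (rule F2[OF hyp assms])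
  have Q1: "eE a1 a2 (k - 1) * eF a1 a2 k = - qq a1 a2 k" by (rule F3[OF hyp])
  have Qr: "qq a1 a2 k = of_real (Re (qq a1 a2 k))" using F4[OF hyp assms] by (simp add: complex_eq_iff)
  have "eE a1 a2 (k - 1) * cnj (eE a1 a2 (k - 1)) * Xr k = - cnj (eE a1 a2 (k - 1)) * (- eE a1 a2 (k - 1) * Xr k)" by simp
  also have "\<dots> = - cnj (eE a1 a2 (k - 1) * eF a1 a2 k) * Xr (k - 1)" unfolding R1[symmetric] by simp
  also have "\<dots> = of_real (Re (qq a1 a2 k)) * Xr (k - 1)" unfolding Q1 using Qr by (metis complex_cnj_complex_of_real complex_cnj_minus minus_minus)
  finally show ?thesis .
qed

lemma step0:
  "Tw a1 a2 a (tF a1 a2 a w) (d - 1) 0 = Re (qq a1 a2 d) * Tw a1 a2 a w d 0"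
proof -
  have pt: "tF a1 a2 a w (d - 1, 0) = (if d - 1 \<in> K1 then eF a1 a2 d * w (d, 0) else 0)"
    by (simp add: tF_pt wK2)
  show ?thesis
  proof (cases "w (d, 0) = 0")
    case True then show ?thesis using pt by (simp add: Tw_def)
  next
    case False
    then have dK: "d \<in> K1" by (rule wK1)
    have "complex_of_real ((cmod (tF a1 a2 a w (d - 1, 0)))\<^sup>2 * Re (xnorm2 a1 a2 (d - 1)))
        = (if d - 1 \<in> K1 then eF a1 a2 d else 0) * cnj (if d - 1 \<in> K1 then eF a1 a2 d else 0) * Xr (d - 1) * (w (d, 0) * cnj (w (d, 0)))"
      unfolding pt of_real_mult complex_norm_square by (simp add: algebra_simps)
    also have "\<dots> = of_real (Re (qq a1 a2 d)) * Xr d * (w (d, 0) * cnj (w (d, 0)))"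
      unfolding Afact[OF dK] ..
    also have "\<dots> = complex_of_real (Re (qq a1 a2 d) * ((cmod (w (d, 0)))\<^sup>2 * Re (xnorm2 a1 a2 d)))"
      unfolding of_real_mult complex_norm_square by (simp add: algebra_simps)
    finally have "(cmod (tF a1 a2 a w (d - 1, 0)))\<^sup>2 * Re (xnorm2 a1 a2 (d - 1))
        = Re (qq a1 a2 d) * ((cmod (w (d, 0)))\<^sup>2 * Re (xnorm2 a1 a2 d))" by (simp only: of_real_eq_iff)
    then show ?thesis by (simp add: Tw_def)
  qed
qed

lemma stepS:
  "Tw a1 a2 a (tF a1 a2 a w) (d - 1) (Suc i) = Tw a1 a2 a (tE a1 a2 a w) (d + 1) i
   + (Re (qq a1 a2 (d + int i + 1)) - (real i + 1) * (real i - a)) * (Tw a1 a2 a w d (Suc i) - Tw a1 a2 a w d i)"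
proof -
  define k where "k = d + int i + 1"
  have k1: "k - 1 = d + int i" "d + 1 + int i = k" "d + int (Suc i) = k" "d - 1 + int (Suc i) = k - 1"
    "- int (Suc i) = - int i - 1" "- int i - 1 + 1 = - int i"
    by (simp_all add: k_def)
  define w1 where "w1 = w (k, - int i - 1)"
  define w0 where "w0 = w (k - 1, - int i)"
  define A where "A = (if k - 1 \<in> K1 then eF a1 a2 k else 0)"
  define B where "B = eF (of_real a) 0 (- int i)"
  define C where "C = (if k \<in> K1 then eE a1 a2 (k - 1) else 0)"
  define D where "D = eE (of_real a) 0 (- int i - 1)"
  define X0 where "X0 = Xr (k - 1)"
  define X1 where "X1 = Xr k"
  define Y0 where "Y0 = Yc i"
  define Y1 where "Y1 = Yc (Suc i)"
  define qc where "qc = complex_of_real (Re (qq a1 a2 k))"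
  define c where "c = complex_of_real ((real i + 1) * (real i - a))"
  have K2m: "- int i - 1 \<in> Kset (of_real a) 0" "- int i \<in> Kset (of_real a) 0" using K2_form[OF aneg] by auto
  have ptF: "tF a1 a2 a w (k - 1, - int i - 1) = A * w1 + B * w0"
    unfolding tF_pt A_def B_def w1_def w0_def using K2m by simp
  have ptE: "tE a1 a2 a w (k, - int i) = C * w0 + D * w1"
    unfolding tE_pt C_def D_def w1_def w0_def using K2m by simp
  have TFS: "Tw a1 a2 a (tF a1 a2 a w) (d - 1) (Suc i) = (cmod (A * w1 + B * w0))\<^sup>2 * Re (xnorm2 a1 a2 (k - 1)) * ynorm2 a (Suc i)"
    unfolding Tw_def k1(4) k1(5) ptF ..
  have TES: "Tw a1 a2 a (tE a1 a2 a w) (d + 1) i = (cmod (C * w0 + D * w1))\<^sup>2 * Re (xnorm2 a1 a2 k) * ynorm2 a i"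
    unfolding Tw_def k1(2) ptE ..
  have TS1: "Tw a1 a2 a w d (Suc i) = (cmod w1)\<^sup>2 * Re (xnorm2 a1 a2 k) * ynorm2 a (Suc i)"
    unfolding Tw_def k1(3) k1(5) w1_def ..
  have TS0: "Tw a1 a2 a w d i = (cmod w0)\<^sup>2 * Re (xnorm2 a1 a2 (k - 1)) * ynorm2 a i"
    unfolding Tw_def w0_def k1(1) ..
  have YR: "Y1 * cnj B = - D * Y0" unfolding Y1_def B_def D_def Y0_def by (rule Y_rel[OF aneg])
  have YP: "D * B = - c" unfolding D_def B_def c_def using Y_prod[OF aneg, of i] by (simp add: algebra_simps)
  have YR': "Y1 * B = - cnj D * Y0"
  proof -
    have "cnj (Y1 * cnj B) = cnj (- D * Y0)" using YR by simp
    then show ?thesis unfolding Y1_def Y0_def by simp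
  qed
  have cr: "cnj c = c" unfolding c_def by simp
  have T1: "A * cnj A * X0 * w1 = qc * X1 * w1"
  proof (cases "w1 = 0")
    case False
    then have "k \<in> K1" unfolding w1_def by (rule wK1)
    then show ?thesis using Afact[of k] unfolding A_def X0_def X1_def qc_def by simp
  qed simp
  have S1: "C * cnj C * X1 * w0 = qc * X0 * w0"
  proof (cases "w0 = 0")
    case False
    then have a: "k - 1 \<in> K1" unfolding w0_def by (rule wK1)
    then have b: "k \<in> K1" using F0[OF hyp a] by simp
    show ?thesis using Cfact[OF b a] b unfolding C_def X0_def X1_def qc_def by simp
  qed simp
  have T4: "B * cnj B * Y1 = c * Y0"
  proof -
    have "B * cnj B * Y1 = B * (Y1 * cnj B)" by simp
    also have "\<dots> = - (D * B) * Y0" unfolding YR by simp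
    finally show ?thesis unfolding YP by simp
  qed
  have S4: "D * cnj D * Y0 = c * Y1"
  proof -
    have "D * cnj D * Y0 = - D * (- cnj D * Y0)" by simp
    also have "\<dots> = - (D * B) * Y1" unfolding YR'[symmetric] by simp
    finally show ?thesis unfolding YP by simp
  qed
  have T2: "A * cnj B * X0 * Y1 * w1 * cnj w0 = cnj C * D * X1 * Y0 * w1 * cnj w0"
  proof (cases "w1 = 0 \<or> w0 = 0")
    case False
    then have a: "k - 1 \<in> K1" "k \<in> K1" unfolding w0_def w1_def using wK1 by blast+
    have R1: "cnj (eF a1 a2 k) * X0 = - eE a1 a2 (k - 1) * X1" unfolding X0_def X1_def by (rule F2[OF hyp a(2) a(1)])
    have R1': "eF a1 a2 k * X0 = - cnj (eE a1 a2 (k - 1)) * X1"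
    proof -
      have "cnj (cnj (eF a1 a2 k) * X0) = cnj (- eE a1 a2 (k - 1) * X1)" using R1 by simp
      then show ?thesis unfolding X0_def X1_def by simp
    qed
    have "A * cnj B * X0 * Y1 = (eF a1 a2 k * X0) * (Y1 * cnj B)" unfolding A_def using a by simp
    also have "\<dots> = cnj C * D * X1 * Y0" unfolding R1' YR C_def using a by simp
    finally show ?thesis by simp
  qed auto
  have T3: "cnj A * B * X0 * Y1 * w0 * cnj w1 = C * cnj D * X1 * Y0 * w0 * cnj w1"
  proof (cases "w1 = 0 \<or> w0 = 0")
    case False
    then have a: "k - 1 \<in> K1" "k \<in> K1" unfolding w0_def w1_def using wK1 by blast+
    have R1: "cnj (eF a1 a2 k) * X0 = - eE a1 a2 (k - 1) * X1" unfolding X0_def X1_def by (rule F2[OF hyp a(2) a(1)])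
    have "cnj A * B * X0 * Y1 = (cnj (eF a1 a2 k) * X0) * (Y1 * B)" unfolding A_def using a by simp
    also have "\<dots> = C * cnj D * X1 * Y0" unfolding R1 YR' C_def using a by simp
    finally show ?thesis by simp
  qed auto
  have core: "(A*w1 + B*w0) * cnj (A*w1 + B*w0) * X0 * Y1 = (C*w0 + D*w1) * cnj (C*w0 + D*w1) * X1 * Y0
          + (qc - c) * (w1 * cnj w1 * X1 * Y1 - w0 * cnj w0 * X0 * Y0)"
    by (rule core_alg[OF T1 S1 T4 S4 T2 T3])
  have "complex_of_real (Tw a1 a2 a (tF a1 a2 a w) (d - 1) (Suc i)) =
     complex_of_real (Tw a1 a2 a (tE a1 a2 a w) (d + 1) i
   + (Re (qq a1 a2 k) - (real i + 1) * (real i - a)) * (Tw a1 a2 a w d (Suc i) - Tw a1 a2 a w d i))"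
    unfolding TFS TES TS1 TS0 of_real_add of_real_mult of_real_diff complex_norm_square
    using core unfolding X0_def X1_def Y0_def Y1_def qc_def c_def by (simp add: algebra_simps)
  then show ?thesis unfolding k_def by (simp only: of_real_eq_iff)
qed

definition "gg j = Re (qq a1 a2 (d + int j)) - real j * (real j - 1 - a)"
definition "mu = 2 * real_of_int d + Re a1 - Re a2 + a"

lemma qq_diff: "qq a1 a2 k - qq a1 a2 (k + 1) = - 2 * of_int k - a1 + a2"
  unfolding qq_def by (simp add: algebra_simps)

lemma gg_step: "gg j - gg (Suc j) = - mu"
proof -
  have "Re (qq a1 a2 (d + int j)) - Re (qq a1 a2 (d + int j + 1)) = - 2 * (real_of_int d + real j) - Re a1 + Re a2"
    using arg_cong[OF qq_diff[of "d + int j"], of Re] by simp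
  moreover have "d + int (Suc j) = d + int j + 1" by simp
  ultimately show ?thesis unfolding gg_def mu_def by (simp add: algebra_simps)
qed

lemma gg_lin: "gg j = mu * real j + gg 0"
proof (induction j)
  case 0 then show ?case by simp
next
  case (Suc j) then show ?case using gg_step[of j] by (simp add: algebra_simps)
qed

lemma sum_ident:
  "(\<Sum>j<Suc J. Tw a1 a2 a (tF a1 a2 a w) (d - 1) j) =
     (\<Sum>j<J. Tw a1 a2 a (tE a1 a2 a w) (d + 1) j) + gg J * Tw a1 a2 a w d J - mu * (\<Sum>j<J. Tw a1 a2 a w d j)"
proof (induction J)
  case 0 then show ?case using step0 by (simp add: gg_def)
next
  case (Suc J)
  have s: "Tw a1 a2 a (tF a1 a2 a w) (d - 1) (Suc J) = Tw a1 a2 a (tE a1 a2 a w) (d + 1) J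
       + gg (Suc J) * (Tw a1 a2 a w d (Suc J) - Tw a1 a2 a w d J)"
  proof -
    have "d + int (Suc J) = d + int J + 1" by simp
    then have "gg (Suc J) = Re (qq a1 a2 (d + int J + 1)) - (real J + 1) * (real J - a)"
      unfolding gg_def by (simp add: algebra_simps)
    then show ?thesis using stepS[of J] by simp
  qed
  have gs: "gg (Suc J) = mu + gg J" using gg_step[of J] by simp
  show ?case using Suc s unfolding gs by (simp add: algebra_simps)
qed

lemma F_step:
  assumes sT: "summable (Tw a1 a2 a w d)" and sE: "summable (Tw a1 a2 a (tE a1 a2 a w) (d + 1))"
  shows "summable (Tw a1 a2 a (tF a1 a2 a w) (d - 1))"
proof (rule tele_summable[OF _ _ _ sE sT sum_ident])
  show "Tw a1 a2 a (tF a1 a2 a w) (d - 1) j \<ge> 0" for j by (rule Tw_nonneg[OF hyp aneg tF_FS[OF wFS]])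
  show "Tw a1 a2 a (tE a1 a2 a w) (d + 1) j \<ge> 0" for j by (rule Tw_nonneg[OF hyp aneg tE_FS[OF wFS]])
  show "Tw a1 a2 a w d j \<ge> 0" for j by (rule Tw_nonneg[OF hyp aneg wFS])
  show "\<bar>gg J\<bar> \<le> \<bar>mu\<bar> * real J + \<bar>gg 0\<bar>" for J
    unfolding gg_lin[of J] by (simp add: abs_mult abs_triangle_ineq[THEN order_trans])
qed auto

end

lemma Tw_scale: "Tw a1 a2 a (\<lambda>p. c * w p) d j = (cmod c)\<^sup>2 * Tw a1 a2 a w d j"
  by (simp add: Tw_def norm_mult power_mult_distrib)

lemma Tw_zero: "Tw a1 a2 a (\<lambda>p. 0) d j = 0"
  by (simp add: Tw_def)

lemma hw_unique:
  assumes hyp: "hypA a1 a2" and aneg: "a < 0" and vFS: "v \<in> FS a1 a2 a"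
    and vE: "tE a1 a2 a v = (\<lambda>p. 0)"
    and vH: "tH a1 a2 a v = (\<lambda>p. (a1 - a2 + of_real a + 2 * of_int n0) * v p)"
    and vnz: "v \<noteq> (\<lambda>p. 0)"
  shows "n0 \<in> Kset a1 a2 \<and> v (n0, 0) \<noteq> 0 \<and>
    (\<forall>j. Tw a1 a2 a v n0 j = (cmod (v (n0, 0)))\<^sup>2 * Tw a1 a2 a (uvec a1 a2 a n0) n0 j)"
proof -
  define \<omega> where "\<omega> j = v (n0 + int j, - int j)" for j
  have diag: "v (k, m) \<noteq> 0 \<Longrightarrow> k + m = n0" for k m by (rule weight_diag[OF vFS vH])
  have allz: "v = (\<lambda>p. 0)" if z: "\<And>j. \<omega> j = 0"
  proof
    fix p :: "int \<times> int"
    obtain k m where p: "p = (k, m)" by (cases p)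
    show "v p = 0"
    proof (rule ccontr)
      assume nz: "v p \<noteq> 0"
      then have "m \<in> Kset (of_real a) 0" using vFS unfolding FS_def p by blast
      then have "m \<le> 0" using K2_form[OF aneg] by simp
      moreover have "k + m = n0" using diag nz p by blast
      ultimately have "p = (n0 + int (nat (- m)), - int (nat (- m)))" unfolding p by simp
      then have "v p = \<omega> (nat (- m))" unfolding \<omega>_def by simp
      with z nz show False by simp
    qed
  qed
  have rec: "eE (of_real a) 0 (- int j - 1) * \<omega> (Suc j) =
      - (if n0 + int j + 1 \<in> Kset a1 a2 then eE a1 a2 (n0 + int j) * \<omega> j else 0)" for j
  proof -
    have mK: "- int j \<in> Kset (of_real a) 0" using K2_form[OF aneg] by simp
    have h: "tE a1 a2 a v (n0 + int j + 1, - int j) = 0" using vE by simp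
    have e1: "n0 + int (Suc j) = n0 + int j + 1" "- int (Suc j) = - int j - 1" by simp_all
    have ws: "\<omega> (Suc j) = v (n0 + int j + 1, - int j - 1)" unfolding \<omega>_def by (simp only: e1)
    have wj: "\<omega> j = v (n0 + int j, - int j)" unfolding \<omega>_def ..
    have e3: "n0 + int j + 1 - 1 = n0 + int j" by simp
    have "tE a1 a2 a v (n0 + int j + 1, - int j) =
      (if n0 + int j + 1 \<in> Kset a1 a2 then eE a1 a2 (n0 + int j) * \<omega> j else 0) +
      eE (of_real a) 0 (- int j - 1) * \<omega> (Suc j)"
      unfolding tE_pt e3 ws wj using mK by simp
    then show ?thesis using h by (simp add: eq_neg_iff_add_eq_0 add.commute)
  qed
  have e2nz: "eE (of_real a) 0 (- int j - 1) \<noteq> 0" for j by (rule e2_nz[OF aneg])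
  have w0: "\<omega> 0 \<noteq> 0"
  proof
    assume z0: "\<omega> 0 = 0"
    have "\<omega> j = 0" for j
    proof (induction j)
      case 0 then show ?case by (rule z0)
    next
      case (Suc j)
      have "eE (of_real a) 0 (- int j - 1) * \<omega> (Suc j) = 0" using rec[of j] Suc.IH by (simp split: if_splits)
      then show ?case using e2nz[of j] by simp
    qed
    then have "v = (\<lambda>p. 0)" by (rule allz)
    with vnz show False by simp
  qed
  then have vn0: "v (n0, 0) \<noteq> 0" unfolding \<omega>_def by simp
  then have n0K: "n0 \<in> Kset a1 a2" using vFS unfolding FS_def by blast
  have wU: "\<omega> j = \<omega> 0 * Useq a1 a2 a n0 j" for j
  proof (induction j)
    case 0 then show ?case by simp
  next
    case (Suc j)
    have "n0 + int j + 1 \<in> Kset a1 a2" by (rule K1_shift1[OF hyp n0K])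
    then have "\<omega> (Suc j) = - eE a1 a2 (n0 + int j) * \<omega> j / eE (of_real a) 0 (- int j - 1)"
      using rec[of j] e2nz[of j] by (simp add: field_simps)
    then show ?case unfolding Suc by (simp add: field_simps)
  qed
  have "Tw a1 a2 a v n0 j = (cmod (v (n0, 0)))\<^sup>2 * Tw a1 a2 a (uvec a1 a2 a n0) n0 j" for j
  proof -
    have "v (n0 + int j, - int j) = v (n0, 0) * uvec a1 a2 a n0 (n0 + int j, - int j)"
      using wU[of j] unfolding \<omega>_def uvec_pt by simp
    then show ?thesis unfolding Tw_def by (simp add: norm_mult power_mult_distrib)
  qed
  with n0K vn0 show ?thesis by blast
qed

lemma hw_extract:
  assumes "hilb_sub lam a1 a2 a"
  shows "\<exists>v. v \<in> FS a1 a2 a \<and> tE a1 a2 a v = (\<lambda>p. 0) \<and> tH a1 a2 a v = (\<lambda>p. lam * v p)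
           \<and> v \<noteq> (\<lambda>p. 0) \<and> inV a1 a2 a v"
proof -
  obtain \<phi> :: "(int \<Rightarrow> complex) \<Rightarrow> (int \<times> int \<Rightarrow> complex)" where
    sc: "\<forall>c. \<forall>v\<in>Nel lam 0. \<phi> (\<lambda>k. c * v k) = (\<lambda>p. c * \<phi> v p)" and
    E: "\<forall>v\<in>Nel lam 0. \<phi> (actE lam 0 v) = tE a1 a2 a (\<phi> v)" and
    H: "\<forall>v\<in>Nel lam 0. \<phi> (actH lam 0 v) = tH a1 a2 a (\<phi> v)" and
    inj: "inj_on \<phi> (Nel lam 0)" and
    V: "\<forall>v\<in>Nel lam 0. \<phi> v \<in> FS a1 a2 a \<and> inV a1 a2 a (\<phi> v)"
    using assms unfolding hilb_sub_def by blast
  define x0 :: "int \<Rightarrow> complex" where "x0 = (\<lambda>k. if k = 0 then 1 else 0)"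
  have K0: "0 \<in> Kset lam 0" unfolding Kset_def by simp
  have K1n: "1 \<notin> Kset lam 0" unfolding Kset_def by auto
  have fin: "{k. x0 k \<noteq> 0} = {0}" unfolding x0_def by auto
  have x0N: "x0 \<in> Nel lam 0" unfolding Nel_def using K0 fin by (auto simp: x0_def)
  have z: "(\<lambda>k. 0 * x0 k) = (\<lambda>k. 0)" by simp
  have phi0: "\<phi> (\<lambda>k. 0) = (\<lambda>p. 0)" using sc x0N z by (metis mult_zero_left)
  have aE: "actE lam 0 x0 = (\<lambda>k. 0)" unfolding actE_def x0_def using K1n by (auto simp: fun_eq_iff)
  have aH: "actH lam 0 x0 = (\<lambda>k. lam * x0 k)" unfolding actH_def x0_def using K0 by (auto simp: fun_eq_iff hw_def)
  have zN: "(\<lambda>k. 0) \<in> Nel lam 0" unfolding Nel_def by simp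
  have "x0 \<noteq> (\<lambda>k. 0)" unfolding x0_def by (auto simp: fun_eq_iff)
  then have nz: "\<phi> x0 \<noteq> (\<lambda>p. 0)" using inj x0N zN phi0 unfolding inj_on_def by metis
  show ?thesis
  proof (intro exI conjI)
    show "\<phi> x0 \<in> FS a1 a2 a" "inV a1 a2 a (\<phi> x0)" using V x0N by auto
    show "tE a1 a2 a (\<phi> x0) = (\<lambda>p. 0)" using E x0N aE phi0 by metis
    show "tH a1 a2 a (\<phi> x0) = (\<lambda>p. lam * \<phi> x0 p)" using H x0N aH sc by metis
    show "\<phi> x0 \<noteq> (\<lambda>p. 0)" by (rule nz)
  qed
qed

lemma Tw_scale': "Tw a1 a2 a (\<lambda>p. c * w p) d = (\<lambda>j. (cmod c)\<^sup>2 * Tw a1 a2 a w d j)"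
  by (simp add: Tw_scale fun_eq_iff)

lemma lam_real:
  assumes "hypA a1 a2"
  shows "a1 + of_real a - a2 + 2 * of_int n0 = complex_of_real (Re a1 - Re a2 + a + 2 * real_of_int n0)"
  using assms
proof (cases rule: hypA_cases)
  case (C1 r2) then show ?thesis by (simp add: complex_eq_iff)
next
  case (C2 x y) then show ?thesis by (simp add: complex_eq_iff)
next
  case (C3 r1 r2) then show ?thesis by (simp add: complex_eq_iff)
qed

lemma suff:
  assumes hyp: "hypA a1 a2" and aneg: "a < 0" and n0K: "n0 \<in> Kset a1 a2"
    and cond: "2 * real_of_int n0 + Re a1 - Re a2 + a < -1"
  shows "hilb_sub (a1 + of_real a - a2 + 2 * of_int n0) a1 a2 a"
proof -
  define l where "l = Re a1 - Re a2 + a + 2 * real_of_int n0"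
  define u where "u = uvec a1 a2 a n0"
  have lam: "a1 + of_real a - a2 + 2 * of_int n0 = complex_of_real l"
    unfolding l_def by (rule lam_real[OF hyp])
  have lam': "a1 - a2 + of_real a + 2 * of_int n0 = complex_of_real l"
    using lam by (simp add: algebra_simps)
  have lneg: "l < 0" using cond unfolding l_def by simp
  have uH: "tH a1 a2 a u = (\<lambda>p. of_real l * u p)"
    unfolding u_def uvec_H[OF hyp aneg n0K] lam' ..
  interpret hwv a1 a2 a l u
    by unfold_locales (use uvec_FS[OF hyp aneg n0K] uvec_E[OF hyp aneg n0K] uH lneg uvec_nz[OF hyp aneg n0K] in \<open>auto simp: u_def\<close>)
  have diagW: "W n (k, m) \<noteq> 0 \<Longrightarrow> k + m = n0 - int n" for n k m
  proof -
    assume h: "W n (k, m) \<noteq> 0"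
    have "tH a1 a2 a (W n) = (\<lambda>p. (a1 - a2 + of_real a + 2 * of_int (n0 - int n)) * W n p)"
      unfolding W_H lam'[symmetric] by (simp add: algebra_simps)
    then show ?thesis using weight_diag[OF W_FS _ h] by blast
  qed
  have u0: "W 0 = u" by simp
  have sU: "summable (Tw a1 a2 a u n0)" unfolding u_def using summable_u[OF hyp aneg n0K] cond by simp
  have Fs: "summable (Tw a1 a2 a (W (Suc n)) (n0 - int (Suc n)))"
    if sT: "summable (Tw a1 a2 a (W n) (n0 - int n))"
      and sE: "summable (Tw a1 a2 a (tE a1 a2 a (W n)) (n0 - int n + 1))" for n
  proof -
    have "summable (Tw a1 a2 a (tF a1 a2 a (W n)) (n0 - int n - 1))"
      by (rule F_step[OF hyp aneg W_FS diagW sT sE])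
    then have "summable (\<lambda>j. (cmod (inverse (fL (- int n))))\<^sup>2 * Tw a1 a2 a (tF a1 a2 a (W n)) (n0 - int n - 1) j)"
      by (rule summable_mult)
    moreover have "n0 - int n - 1 = n0 - int (Suc n)" by simp
    moreover have "W (Suc n) = (\<lambda>p. inverse (fL (- int n)) * tF a1 a2 a (W n) p)" by simp
    ultimately show ?thesis by (simp only: Tw_scale')
  qed
  have S: "summable (Tw a1 a2 a (W n) (n0 - int n)) \<and> summable (Tw a1 a2 a (W (Suc n)) (n0 - int (Suc n)))" for n
  proof (induction n)
    case 0
    have s0: "summable (Tw a1 a2 a (W 0) (n0 - int 0))" using sU by simp
    have sE: "summable (Tw a1 a2 a (tE a1 a2 a (W 0)) (n0 - int 0 + 1))"
      unfolding W_E0 Tw_zero by simp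
    show ?case using s0 Fs[OF s0 sE] by simp
  next
    case (Suc n)
    have s1: "summable (Tw a1 a2 a (W (Suc n)) (n0 - int (Suc n)))" using Suc by simp
    have eq: "n0 - int (Suc n) + 1 = n0 - int n" by simp
    have sE: "summable (Tw a1 a2 a (tE a1 a2 a (W (Suc n))) (n0 - int (Suc n) + 1))"
      unfolding W_E Tw_scale eq using Suc by simp
    show ?case using s1 Fs[OF s1 sE] by simp
  qed
  have "inV a1 a2 a (W n)" for n
    using inV_diag[OF hyp aneg W_FS diagW] S[of n] by blast
  then have "hilb_sub (of_real l) a1 a2 a" by (rule hilb_sub_main)
  then show ?thesis unfolding lam .
qed

lemma key:
  assumes hyp: "hypA a1 a2" and aneg: "a < 0"
  shows "hilb_sub (a1 + of_real a - a2 + 2 * of_int n0) a1 a2 a \<longleftrightarrow>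
    (n0 \<in> Kset a1 a2 \<and> 2 * real_of_int n0 + Re a1 - Re a2 + a < -1)"
proof
  assume h: "hilb_sub (a1 + of_real a - a2 + 2 * of_int n0) a1 a2 a"
  obtain v where v: "v \<in> FS a1 a2 a" "tE a1 a2 a v = (\<lambda>p. 0)"
    "tH a1 a2 a v = (\<lambda>p. (a1 + of_real a - a2 + 2 * of_int n0) * v p)" "v \<noteq> (\<lambda>p. 0)" "inV a1 a2 a v"
    using hw_extract[OF h] by blast
  have vH: "tH a1 a2 a v = (\<lambda>p. (a1 - a2 + of_real a + 2 * of_int n0) * v p)"
    unfolding v(3) by (simp add: algebra_simps)
  have U: "n0 \<in> Kset a1 a2 \<and> v (n0, 0) \<noteq> 0 \<and>
    (\<forall>j. Tw a1 a2 a v n0 j = (cmod (v (n0, 0)))\<^sup>2 * Tw a1 a2 a (uvec a1 a2 a n0) n0 j)"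
    by (rule hw_unique[OF hyp aneg v(1) v(2) vH v(4)])
  have diag: "v (k, m) \<noteq> 0 \<Longrightarrow> k + m = n0" for k m by (rule weight_diag[OF v(1) vH])
  have "summable (Tw a1 a2 a v n0)" using inV_diag[OF hyp aneg v(1) diag] v(5) by blast
  moreover have "Tw a1 a2 a v n0 = (\<lambda>j. (cmod (v (n0, 0)))\<^sup>2 * Tw a1 a2 a (uvec a1 a2 a n0) n0 j)"
    using U by auto
  ultimately have "summable (\<lambda>j. (cmod (v (n0, 0)))\<^sup>2 * Tw a1 a2 a (uvec a1 a2 a n0) n0 j)"
    by simp
  then have "summable (Tw a1 a2 a (uvec a1 a2 a n0) n0)" using U by (simp only: summable_cmult_iff) simp
  then show "n0 \<in> Kset a1 a2 \<and> 2 * real_of_int n0 + Re a1 - Re a2 + a < -1"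
    using summable_u[OF hyp aneg] U by blast
next
  assume "n0 \<in> Kset a1 a2 \<and> 2 * real_of_int n0 + Re a1 - Re a2 + a < -1"
  then show "hilb_sub (a1 + of_real a - a2 + 2 * of_int n0) a1 a2 a"
    using suff[OF hyp aneg] by blast
qed

theorem mainTheorem4:
  fixes a :: real and a1 a2 :: complex
  assumes "a < 0"
    and "(a1 = 0 \<and> Im a2 = 0 \<and> Re a2 < 0)
       \<or> (\<exists>x y. -1 \<le> x \<and> x < 0 \<and> y > 0 \<and> a1 = Complex (-1 - x) y \<and> a2 = Complex x y)
       \<or> (Im a1 = 0 \<and> Im a2 = 0 \<and> -1 < Re a1 \<and> Re a1 < 0 \<and> -1 < Re a2 \<and> Re a2 < 0)"
  shows "(\<forall>lam. hilb_sub lam a1 a2 a \<longrightarrow>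
            (\<exists>n0::int. lam = a1 + of_real a - a2 + 2 * of_int n0))
       \<and> (a1 = 0 \<longrightarrow> (\<forall>n0::int.
            hilb_sub (of_real a - a2 + 2 * of_int n0) a1 a2 a \<longleftrightarrow>
            (0 \<le> 2 * n0 \<and> real_of_int (2 * n0) < -1 - a + Re a2)))
       \<and> (a1 \<noteq> 0 \<longrightarrow> (\<forall>n0::int.
            hilb_sub (a1 + of_real a - a2 + 2 * of_int n0) a1 a2 a \<longleftrightarrow>
            real_of_int (2 * n0) < -1 - a - Re a1 + Re a2))"
proof (intro conjI allI impI)
  have hyp: "hypA a1 a2" using assms(2) unfolding hypA_def .
  note aneg = assms(1)
  {
    fix lam assume h: "hilb_sub lam a1 a2 a"
    obtain v where v: "v \<in> FS a1 a2 a" "tH a1 a2 a v = (\<lambda>p. lam * v p)" "v \<noteq> (\<lambda>p. 0)"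
      using hw_extract[OF h] by blast
    obtain p where p: "v p \<noteq> 0" using v(3) by (meson ext)
    obtain k m where km: "p = (k, m)" by (cases p)
    have "lam = a1 - a2 + of_real a + 2 * of_int (k + m)"
      using weight_support[OF v(1) v(2)] p km by blast
    then show "\<exists>n0::int. lam = a1 + of_real a - a2 + 2 * of_int n0"
      by (intro exI[of _ "k + m"]) (simp add: algebra_simps)
  }
  {
    fix n0 :: int assume a10: "a1 = 0"
    have K: "Kset a1 a2 = {k. 0 \<le> k}" using K1_form[OF hyp] a10 by simp
    have e: "of_real a - a2 + 2 * of_int n0 = a1 + of_real a - a2 + 2 * of_int n0" using a10 by simp
    show "hilb_sub (of_real a - a2 + 2 * of_int n0) a1 a2 a \<longleftrightarrow>
            (0 \<le> 2 * n0 \<and> real_of_int (2 * n0) < -1 - a + Re a2)"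
      unfolding e key[OF hyp aneg] K using a10 by auto
  }
  {
    fix n0 :: int assume a10: "a1 \<noteq> 0"
    have K: "Kset a1 a2 = UNIV" using K1_form[OF hyp] a10 by simp
    show "hilb_sub (a1 + of_real a - a2 + 2 * of_int n0) a1 a2 a \<longleftrightarrow>
            real_of_int (2 * n0) < -1 - a - Re a1 + Re a2"
      unfolding key[OF hyp aneg] K by auto
  }
qed

end
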